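(* Let $\mathcal D=[x_{1/2},x_{N_x+1/2}]\times[z_{1/2},z_{N_z+1/2}]$ be partitioned into rectangles $K_{ij}=[x_{i-1/2},x_{i+1/2}]\times[z_{j-1/2},z_{j+1/2}]$, and let $V_h^k$ be the space of functions in $L^2(\mathcal D)$ whose restriction to each $K_{ij}$ is a polynomial of degree at most $k$; $\mathbf V_h^k$ denotes $M$-vectors with entries in $V_h^k$. Let $\mathbf A(\mathbf x)=(a_{kj}(\mathbf x))_{k,j=1}^M$ be a symmetric positive definite matrix function, smooth on each cell (possible discontinuities only along mesh lines), and let $\bar{\mathbf A}$ be the matrix whose $(k,l)$ entry is $\nabla a_{kl}$, so that $(\bar{\mathbf A}\mathbf v)_k=\sum_l v_l\nabla a_{kl}$. Consider the semi-discrete LDG scheme: find $\widehat{\mathbf v}_h(t)\in\mathbf V_h^k$ (twice differentiable in $t$) and $\widehat{\mathbf S}_h(t)\in(\mathbf V_h^k)^2$ (an $M\times 2$ matrix whose columns are in $\mathbf V_h^k$) such that for every cell $K=K_{ij}$ with outward unit normal $\boldsymbol\nu$, $$\int_K \partial_t^2\widehat{\mathbf v}_h\cdot\mathbf p_h\,d\mathbf x+\int_K\mathbf A\widehat{\mathbf S}_h\cdot\nabla\mathbf p_h\,d\mathbf x-\big(\mathbf A^-\widehat{\mathbf S}_h^-\boldsymbol\nu,\mathbf p_h\big)_{\partial K}=0\qquad\forall\mathbf p_h\in\mathbf V_h^k,$$ $$\int_K\widehat{\mathbf S}_h\cdot\mathbf w_h\,d\mathbf x+\int_K\mathbf A\widehat{\mathbf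 v}_h\cdot\operatorname{div}\mathbf w_h\,d\mathbf x+\int_K\bar{\mathbf A}\widehat{\mathbf v}_h\cdot\mathbf w_h\,d\mathbf x-\big(\mathbf A\widehat{\mathbf v}_h^+,\mathbf w_h\boldsymbol\nu\big)_{\partial K}=0\qquad\forall\mathbf w_h\in(\mathbf V_h^k)^2,$$ where in the last boundary term $\mathbf A$ is evaluated from inside $K$, and on each interior edge the superscript $-$ ($+$) denotes the trace from the left/lower (right/upper) neighbouring cell (alternating fluxes), with homogeneous Dirichlet boundary conditions $\widehat{\mathbf v}=0$ on $\partial\mathcal D$. Then the semi-discrete energy $$E_h(t)=\int_{\mathcal D}\Big(\partial_t\widehat{\mathbf v}_h\cdot\partial_t\widehat{\mathbf v}_h+\widehat{\mathbf S}_h\cdot\widehat{\mathbf S}_h\Big)d\mathbf x$$ is conserved by this scheme for all $t>0$, i.e. $\frac{d}{dt}E_h(t)=0$.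
   Context: The scheme discretizes the stochastic Galerkin (generalized polynomial chaos) system $\partial_t^2\widehat{\mathbf v}=\operatorname{div}(\mathbf A\widehat{\mathbf S})$, $\widehat{\mathbf S}=\mathbf A\nabla\widehat{\mathbf v}$ on $\mathcal D$ with $\widehat{\mathbf v}=0$ on $\partial\mathcal D$, where $a_{kj}(\mathbf x)=\int a(\mathbf x,\mathbf y)\Phi_k(\mathbf y)\Phi_j(\mathbf y)\rho(\mathbf y)d\mathbf y$ for orthonormal polynomials $\Phi_m$ with respect to the density $\rho$ of $\mathbf y$. Here "$\cdot$" denotes the Euclidean/Frobenius inner product of vectors or matrices, divergence and gradient act row-wise, and $\mathbf A^-$ is the matrix with entries $a_{kj}^-$. The analogous result holds with the other alternating choice ($\mathbf A^+\widehat{\mathbf S}_h^+$ and $\widehat{\mathbf v}_h^-$). *)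

theory Defs
  imports "HOL-Analysis.Analysis"
begin

text \<open>A DG function in V_h^k is represented by the
family of its polynomial pieces: u i j is the polynomial (defined on the whole plane)
whose restriction to the cell K_ij is the function.  Traces on cell edges are then
evaluations of the appropriate piece.  Cells are indexed from 0:
K_ij = [xs i, xs (i+1)] x [zs j, zs (j+1)], i < Nx, j < Nz
(so xs i is x_{i+1/2} of the paper).  Vector components m < M; matrix columns d < 2
(d = 0: x-direction, d = 1: z-direction).\<close>

definition poly2 :: "nat \<Rightarrow> (real \<times> real \<Rightarrow> real) \<Rightarrow> bool" where
  "poly2 k f \<longleftrightarrow> (\<exists>c :: nat \<Rightarrow> nat \<Rightarrow> real.
      \<forall>x z. f (x, z) = (\<Sum>a\<le>k. \<Sum>b\<le>k - a. c a b * x ^ a * z ^ b))"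

definition pdx :: "(real \<times> real \<Rightarrow> real) \<Rightarrow> real \<times> real \<Rightarrow> real" where
  "pdx f = (\<lambda>(x, z). deriv (\<lambda>s. f (s, z)) x)"

definition pdz :: "(real \<times> real \<Rightarrow> real) \<Rightarrow> real \<times> real \<Rightarrow> real" where
  "pdz f = (\<lambda>(x, z). deriv (\<lambda>s. f (x, s)) z)"

definition pd :: "nat \<Rightarrow> (real \<times> real \<Rightarrow> real) \<Rightarrow> real \<times> real \<Rightarrow> real" where
  "pd d f = (if d = 0 then pdx f else pdz f)"

definition cell :: "(nat \<Rightarrow> real) \<Rightarrow> (nat \<Rightarrow> real) \<Rightarrow> nat \<Rightarrow> nat \<Rightarrow> (real \<times> real) set" where
  "cell xs zs i j = {xs i..xs (Suc i)} \<times> {zs j..zs (Suc j)}"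

definition Vh :: "nat \<Rightarrow> nat \<Rightarrow> nat \<Rightarrow> nat \<Rightarrow>
    (nat \<Rightarrow> nat \<Rightarrow> nat \<Rightarrow> real \<times> real \<Rightarrow> real) \<Rightarrow> bool" where
  "Vh Nx Nz M k p \<longleftrightarrow> (\<forall>i<Nx. \<forall>j<Nz. \<forall>m<M. poly2 k (p i j m))"

definition Vh2 :: "nat \<Rightarrow> nat \<Rightarrow> nat \<Rightarrow> nat \<Rightarrow>
    (nat \<Rightarrow> nat \<Rightarrow> nat \<Rightarrow> nat \<Rightarrow> real \<times> real \<Rightarrow> real) \<Rightarrow> bool" where
  "Vh2 Nx Nz M k w \<longleftrightarrow> (\<forall>i<Nx. \<forall>j<Nz. \<forall>m<M. \<forall>d<2. poly2 k (w i j m d))"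

text \<open>Boundary pairing over the four edges of cell (i,j) with outward normal:
gR, gL are integrands (in z) on the right/left edge of the scalar product
F.p where F is the x-component (normal = (1,0) resp. (-1,0)); gT, gB likewise in x
on the top/bottom edge with the z-component.\<close>
definition bdry :: "(nat \<Rightarrow> real) \<Rightarrow> (nat \<Rightarrow> real) \<Rightarrow> nat \<Rightarrow> nat \<Rightarrow>
    (real \<Rightarrow> real) \<Rightarrow> (real \<Rightarrow> real) \<Rightarrow> (real \<Rightarrow> real) \<Rightarrow> (real \<Rightarrow> real) \<Rightarrow> real" where
  "bdry xs zs i j gR gL gT gB =
      integral {zs j..zs (Suc j)} gR - integral {zs j..zs (Suc j)} gL
    + integral {xs i..xs (Suc i)} gT - integral {xs i..xs (Suc i)} gB"

definition AS :: "nat \<Rightarrow> (nat \<Rightarrow> nat \<Rightarrow> nat \<Rightarrow> nat \<Rightarrow> real \<times> real \<Rightarrow> real) \<Rightarrow>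
    (nat \<Rightarrow> nat \<Rightarrow> nat \<Rightarrow> nat \<Rightarrow> real \<times> real \<Rightarrow> real) \<Rightarrow>
    nat \<Rightarrow> nat \<Rightarrow> nat \<Rightarrow> nat \<Rightarrow> real \<times> real \<Rightarrow> real" where
  "AS M A S i j k d y = (\<Sum>l<M. A i j k l y * S i j l d y)"

text \<open>Flux A^- S^- : from the left (lower) neighbour; on the boundary of D the interior trace.\<close>
definition eq1 :: "nat \<Rightarrow> nat \<Rightarrow> nat \<Rightarrow> (nat \<Rightarrow> real) \<Rightarrow> (nat \<Rightarrow> real) \<Rightarrow>
    (nat \<Rightarrow> nat \<Rightarrow> nat \<Rightarrow> nat \<Rightarrow> real \<times> real \<Rightarrow> real) \<Rightarrow>
    (nat \<Rightarrow> nat \<Rightarrow> nat \<Rightarrow> real \<times> real \<Rightarrow> real) \<Rightarrow>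
    (nat \<Rightarrow> nat \<Rightarrow> nat \<Rightarrow> nat \<Rightarrow> real \<times> real \<Rightarrow> real) \<Rightarrow>
    nat \<Rightarrow> nat \<Rightarrow> (nat \<Rightarrow> nat \<Rightarrow> nat \<Rightarrow> real \<times> real \<Rightarrow> real) \<Rightarrow> bool" where
  "eq1 Nx Nz M xs zs A vtt S i j p \<longleftrightarrow>
    (let iL = (if 0 < i then i - 1 else i); jB = (if 0 < j then j - 1 else j) in
     integral (cell xs zs i j) (\<lambda>y. \<Sum>m<M. vtt i j m y * p i j m y)
     + integral (cell xs zs i j) (\<lambda>y. \<Sum>m<M. \<Sum>d<2. AS M A S i j m d y * pd d (p i j m) y)
     - (\<Sum>m<M. bdry xs zs i j
          (\<lambda>z. AS M A S i j m 0 (xs (Suc i), z) * p i j m (xs (Suc i), z))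
          (\<lambda>z. AS M A S iL j m 0 (xs i, z) * p i j m (xs i, z))
          (\<lambda>x. AS M A S i j m 1 (x, zs (Suc j)) * p i j m (x, zs (Suc j)))
          (\<lambda>x. AS M A S i jB m 1 (x, zs j) * p i j m (x, zs j)))
     = 0)"

text \<open>Second equation on cell (i,j) at a fixed time.  Flux v^+ : from the right (upper)
neighbour; on the boundary of D it is the Dirichlet value 0.  A is taken from inside K.\<close>
definition eq2 :: "nat \<Rightarrow> nat \<Rightarrow> nat \<Rightarrow> (nat \<Rightarrow> real) \<Rightarrow> (nat \<Rightarrow> real) \<Rightarrow>
    (nat \<Rightarrow> nat \<Rightarrow> nat \<Rightarrow> nat \<Rightarrow> real \<times> real \<Rightarrow> real) \<Rightarrow>
    (nat \<Rightarrow> nat \<Rightarrow> nat \<Rightarrow> real \<times> real \<Rightarrow> real) \<Rightarrow>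
    (nat \<Rightarrow> nat \<Rightarrow> nat \<Rightarrow> nat \<Rightarrow> real \<times> real \<Rightarrow> real) \<Rightarrow>
    nat \<Rightarrow> nat \<Rightarrow> (nat \<Rightarrow> nat \<Rightarrow> nat \<Rightarrow> nat \<Rightarrow> real \<times> real \<Rightarrow> real) \<Rightarrow> bool" where
  "eq2 Nx Nz M xs zs A v S i j w \<longleftrightarrow>
    (let vR = (\<lambda>l y. if Suc i < Nx then v (Suc i) j l y else 0);
         vL = (\<lambda>l y. if 0 < i then v i j l y else 0);
         vT = (\<lambda>l y. if Suc j < Nz then v i (Suc j) l y else 0);
         vB = (\<lambda>l y. if 0 < j then v i j l y else 0) in
     integral (cell xs zs i j) (\<lambda>y. \<Sum>m<M. \<Sum>d<2. S i j m d y * w i j m d y)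
     + integral (cell xs zs i j) (\<lambda>y. \<Sum>m<M. (\<Sum>l<M. A i j m l y * v i j l y)
            * (pdx (w i j m 0) y + pdz (w i j m 1) y))
     + integral (cell xs zs i j) (\<lambda>y. \<Sum>m<M. \<Sum>d<2.
            (\<Sum>l<M. v i j l y * pd d (A i j m l) y) * w i j m d y)
     - (\<Sum>m<M. bdry xs zs i j
          (\<lambda>z. (\<Sum>l<M. A i j m l (xs (Suc i), z) * vR l (xs (Suc i), z)) * w i j m 0 (xs (Suc i), z))
          (\<lambda>z. (\<Sum>l<M. A i j m l (xs i, z) * vL l (xs i, z)) * w i j m 0 (xs i, z))
          (\<lambda>x. (\<Sum>l<M. A i j m l (x, zs (Suc j)) * vT l (x, zs (Suc j))) * w i j m 1 (x, zs (Suc j)))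
          (\<lambda>x. (\<Sum>l<M. A i j m l (x, zs j) * vB l (x, zs j)) * w i j m 1 (x, zs j)))
     = 0)"

definition energy :: "nat \<Rightarrow> nat \<Rightarrow> nat \<Rightarrow> (nat \<Rightarrow> real) \<Rightarrow> (nat \<Rightarrow> real) \<Rightarrow>
    (nat \<Rightarrow> nat \<Rightarrow> nat \<Rightarrow> real \<times> real \<Rightarrow> real) \<Rightarrow>
    (nat \<Rightarrow> nat \<Rightarrow> nat \<Rightarrow> nat \<Rightarrow> real \<times> real \<Rightarrow> real) \<Rightarrow> real" where
  "energy Nx Nz M xs zs vt S =
     (\<Sum>i<Nx. \<Sum>j<Nz. integral (cell xs zs i j)
        (\<lambda>y. (\<Sum>m<M. vt i j m y * vt i j m y) + (\<Sum>m<M. \<Sum>d<2. S i j m d y * S i j m d y)))"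

end

theory Submission
  imports Defs "Jordan_Normal_Form.Determinant"
begin

lemma inj_inverse_nat:
  fixes G :: "nat \<Rightarrow> nat \<Rightarrow> real"
  assumes inj: "\<forall>x. (\<forall>i<N. (\<Sum>j<N. G i j * x j) = 0) \<longrightarrow> (\<forall>j<N. x j = 0)"
  shows "\<exists>H. \<forall>i<N. \<forall>j<N. (\<Sum>l<N. H i l * G l j) = (if i = j then 1 else 0)"
proof -
  define A where "A = mat N N (\<lambda>(i,j). G i j)"
  have A: "A \<in> carrier_mat N N" unfolding A_def by simp
  have "det A \<noteq> 0"
  proof
    assume "det A = 0"
    then obtain v where v: "v \<in> carrier_vec N" "v \<noteq> 0\<^sub>v N" "A *\<^sub>v v = 0\<^sub>v N"
      using det_0_iff_vec_prod_zero[OF A] by auto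
    have "\<forall>i<N. (\<Sum>j<N. G i j * v $ j) = 0"
    proof (intro allI impI)
      fix i assume i: "i < N"
      have "(A *\<^sub>v v) $ i = 0" using v i by simp
      moreover have "(A *\<^sub>v v) $ i = (\<Sum>j<N. G i j * v $ j)"
        using i v(1) unfolding A_def by (simp add: scalar_prod_def lessThan_atLeast0)
      ultimately show "(\<Sum>j<N. G i j * v $ j) = 0" by simp
    qed
    with inj have "\<forall>j<N. v $ j = 0" by blast
    then have "v = 0\<^sub>v N" using v(1) by (intro eq_vecI) auto
    with v(2) show False by simp
  qed
  define B where "B = adj_mat A"
  have B: "B \<in> carrier_mat N N" "B * A = det A \<cdot>\<^sub>m 1\<^sub>m N" using adj_mat[OF A] B_def by auto
  show ?thesis
  proof (intro exI allI impI)
    fix i j assume ij: "i < N" "j < N"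
    have "(B * A) $$ (i, j) = (\<Sum>l<N. B $$ (i, l) * G l j)"
      using ij B(1) unfolding A_def by (simp add: scalar_prod_def lessThan_atLeast0)
    moreover have "(B * A) $$ (i, j) = det A * (if i = j then 1 else 0)"
      using ij B(2) by simp
    ultimately show "(\<Sum>l<N. B $$ (i, l) / det A * G l j) = (if i = j then 1 else 0)"
      using \<open>det A \<noteq> 0\<close> by (auto simp add: sum_divide_distrib[symmetric] split: if_splits)
  qed
qed

lemma inj_inverse:
  fixes G :: "'i \<Rightarrow> 'i \<Rightarrow> real"
  assumes fin: "finite I"
    and inj: "\<forall>x. (\<forall>i\<in>I. (\<Sum>j\<in>I. G i j * x j) = 0) \<longrightarrow> (\<forall>j\<in>I. x j = 0)"
  shows "\<exists>H. \<forall>i\<in>I. \<forall>j\<in>I. (\<Sum>l\<in>I. H i l * G l j) = (if i = j then 1 else 0)"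
proof -
  define N where "N = card I"
  obtain e where e: "bij_betw e {0..<N} I" using ex_bij_betw_nat_finite[OF fin] N_def by blast
  then have e': "bij_betw e {..<N} I" by (simp add: lessThan_atLeast0)
  define e' where "e' = the_inv_into {..<N} e"
  have e'b: "bij_betw e' I {..<N}" unfolding e'_def by (rule bij_betw_the_inv_into[OF e'])
  have ee': "\<And>i. i \<in> I \<Longrightarrow> e (e' i) = i"
    unfolding e'_def using f_the_inv_into_f_bij_betw[OF e'] by blast
  have e'I: "\<And>i. i \<in> I \<Longrightarrow> e' i < N"
    using e'b unfolding bij_betw_def by auto
  have e'e: "\<And>i. i < N \<Longrightarrow> e' (e i) = i"
    unfolding e'_def using the_inv_into_f_f e' unfolding bij_betw_def by fastforce
  have sumI: "\<And>g. (\<Sum>j\<in>I. g j) = (\<Sum>j<N. g (e j))"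
    using sum.reindex_bij_betw[OF e'] by metis
  have "\<forall>x. (\<forall>i<N. (\<Sum>j<N. G (e i) (e j) * x j) = 0) \<longrightarrow> (\<forall>j<N. x j = 0)"
  proof (intro allI impI)
    fix x :: "nat \<Rightarrow> real" and j
    assume h: "\<forall>i<N. (\<Sum>j<N. G (e i) (e j) * x j) = 0" and j: "j < N"
    define y where "y = (\<lambda>i. x (e' i))"
    have "\<forall>i\<in>I. (\<Sum>j\<in>I. G i j * y j) = 0"
    proof
      fix i assume i: "i \<in> I"
      have "(\<Sum>j\<in>I. G i j * y j) = (\<Sum>j<N. G (e (e' i)) (e j) * x j)"
        unfolding sumI y_def using ee'[OF i] e'e by simp
      also have "\<dots> = 0" using h e'I[OF i] by blast
      finally show "(\<Sum>j\<in>I. G i j * y j) = 0" .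
    qed
    with inj have "\<forall>j\<in>I. y j = 0" by blast
    moreover have "e j \<in> I" using e' j by (auto simp: bij_betw_def)
    ultimately show "x j = 0" using e'e[OF j] y_def by metis
  qed
  from inj_inverse_nat[OF this] obtain H' where
    H': "\<forall>i<N. \<forall>j<N. (\<Sum>l<N. H' i l * G (e l) (e j)) = (if i = j then 1 else 0)" by blast
  show ?thesis
  proof (intro exI ballI)
    fix i j assume i: "i \<in> I" and j: "j \<in> I"
    have "(\<Sum>l\<in>I. H' (e' i) (e' l) * G l j) = (\<Sum>l<N. H' (e' i) l * G (e l) (e (e' j)))"
      unfolding sumI using e'e ee'[OF j] by simp
    also have "\<dots> = (if e' i = e' j then 1 else 0)" using H' e'I i j by blast
    also have "\<dots> = (if i = j then 1 else 0)" using ee' i j by metis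
    finally show "(\<Sum>l\<in>I. H' (e' i) (e' l) * G l j) = (if i = j then 1 else 0)" .
  qed
qed

lemma coeff_deriv:
  fixes G :: "'i \<Rightarrow> 'i \<Rightarrow> real" and c F :: "real \<Rightarrow> 'i \<Rightarrow> real"
  assumes fin: "finite I"
    and inj: "\<forall>x. (\<forall>i\<in>I. (\<Sum>j\<in>I. G i j * x j) = 0) \<longrightarrow> (\<forall>j\<in>I. x j = 0)"
    and ev: "eventually (\<lambda>s. \<forall>i\<in>I. (\<Sum>j\<in>I. G i j * c s j) = F s i) (nhds t)"
    and dF: "\<forall>i\<in>I. \<exists>D. ((\<lambda>s. F s i) has_real_derivative D) (at t)"
  shows "\<forall>j\<in>I. \<exists>D. ((\<lambda>s. c s j) has_real_derivative D) (at t)"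
proof
  fix j assume j: "j \<in> I"
  obtain H where H: "\<forall>i\<in>I. \<forall>j\<in>I. (\<Sum>l\<in>I. H i l * G l j) = (if i = j then 1 else 0)"
    using inj_inverse[OF fin inj] by blast
  obtain F' where F': "\<forall>i\<in>I. ((\<lambda>s. F s i) has_real_derivative F' i) (at t)"
    using dF by metis
  have ev2: "eventually (\<lambda>s. c s j = (\<Sum>l\<in>I. H j l * F s l)) (nhds t)"
    using ev
  proof eventually_elim
    case (elim s)
    have "(\<Sum>l\<in>I. H j l * F s l) = (\<Sum>l\<in>I. H j l * (\<Sum>i\<in>I. G l i * c s i))"
      using elim by simp
    also have "\<dots> = (\<Sum>l\<in>I. \<Sum>i\<in>I. H j l * G l i * c s i)"
      by (simp add: sum_distrib_left mult.assoc)
    also have "\<dots> = (\<Sum>i\<in>I. \<Sum>l\<in>I. H j l * G l i * c s i)"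
      by (rule sum.swap)
    also have "\<dots> = (\<Sum>i\<in>I. (\<Sum>l\<in>I. H j l * G l i) * c s i)"
      by (simp add: sum_distrib_right)
    also have "\<dots> = (\<Sum>i\<in>I. (if j = i then 1 else 0) * c s i)"
      using H j by simp
    also have "\<dots> = c s j" proof -
      have "(\<Sum>i\<in>I. (if j = i then 1 else 0) * c s i) = (\<Sum>i\<in>I. if j = i then c s i else 0)"
        by (rule sum.cong) auto
      also have "\<dots> = c s j" using fin j by simp
      finally show ?thesis .
    qed
    finally show ?case by simp
  qed
  have "((\<lambda>s. (\<Sum>l\<in>I. H j l * F s l)) has_real_derivative (\<Sum>l\<in>I. H j l * F' l)) (at t)"
    using F' by (auto intro!: derivative_eq_intros simp: mult.commute)
  then show "\<exists>D. ((\<lambda>s. c s j) has_real_derivative D) (at t)"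
    using DERIV_cong_ev[OF refl ev2 refl] by blast
qed

definition FR :: "real \<Rightarrow> ('a::topological_space) set \<Rightarrow> (real \<Rightarrow> 'a \<Rightarrow> real) \<Rightarrow> bool" where
  "FR t K h \<longleftrightarrow> (\<exists>L :: ((real \<Rightarrow> real) \<times> real \<times> ('a \<Rightarrow> real)) list.
     (\<forall>p\<in>set L. (fst p has_real_derivative fst (snd p)) (at t) \<and> continuous_on K (snd (snd p))) \<and>
     eventually (\<lambda>s. \<forall>y\<in>K. h s y = (\<Sum>p\<leftarrow>L. fst p s * snd (snd p) y)) (nhds t))"

lemma sum_list_deriv:
  assumes "\<forall>p\<in>set L. ((f p) has_real_derivative f' p) (at t)"
  shows "((\<lambda>s. \<Sum>p\<leftarrow>L. f p s) has_real_derivative (\<Sum>p\<leftarrow>L. f' p)) (at t)"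
  using assms by (induction L) (auto intro!: derivative_eq_intros)

lemma integrable_cmult_real:
  "f integrable_on S \<Longrightarrow> (\<lambda>x. (c::real) * f x) integrable_on S"
  using integrable_on_cmult_left[of f S c] by simp

lemma integrable_sum_list:
  fixes g :: "'p \<Rightarrow> 'x::euclidean_space \<Rightarrow> real"
  assumes "\<forall>p\<in>set L. g p integrable_on K"
  shows "(\<lambda>y. \<Sum>p\<leftarrow>L. c p * g p y) integrable_on K"
  using assms by (induction L) (auto intro!: integrable_add integrable_cmult_real integrable_0)

lemma integral_sum_list:
  fixes g :: "'p \<Rightarrow> 'x::euclidean_space \<Rightarrow> real"
  assumes "\<forall>p\<in>set L. g p integrable_on K"
  shows "integral K (\<lambda>y. \<Sum>p\<leftarrow>L. c p * g p y) = (\<Sum>p\<leftarrow>L. c p * integral K (g p))"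
  using assms
proof (induction L)
  case Nil then show ?case by simp
next
  case (Cons a L)
  have "integral K (\<lambda>y. \<Sum>p\<leftarrow>a # L. c p * g p y)
      = integral K (\<lambda>y. c a * g a y + (\<Sum>p\<leftarrow>L. c p * g p y))" by simp
  also have "\<dots> = integral K (\<lambda>y. c a * g a y) + integral K (\<lambda>y. \<Sum>p\<leftarrow>L. c p * g p y)"
    using Cons.prems by (intro integral_add integrable_sum_list integrable_cmult_real) auto
  also have "\<dots> = c a * integral K (g a) + (\<Sum>p\<leftarrow>L. c p * integral K (g p))"
    using Cons by simp
  finally show ?case by simp
qed

lemma FR_deriv_repr:
  assumes "\<forall>p\<in>set L. (fst p has_real_derivative fst (snd p)) (at t)"
    and "eventually (\<lambda>s. \<forall>y\<in>K. h s y = (\<Sum>p\<leftarrow>L. fst p s * snd (snd p) y)) (nhds t)"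
    and "y \<in> K"
  shows "((\<lambda>s. h s y) has_real_derivative (\<Sum>p\<leftarrow>L. fst (snd p) * snd (snd p) y)) (at t)"
proof -
  have d: "((\<lambda>s. \<Sum>p\<leftarrow>L. fst p s * snd (snd p) y) has_real_derivative (\<Sum>p\<leftarrow>L. fst (snd p) * snd (snd p) y)) (at t)"
    using assms(1) by (intro sum_list_deriv) (auto intro!: derivative_eq_intros)
  have ev: "eventually (\<lambda>s. h s y = (\<Sum>p\<leftarrow>L. fst p s * snd (snd p) y)) (nhds t)"
    using assms(2) by eventually_elim (use assms(3) in blast)
  show ?thesis by (rule iffD2[OF DERIV_cong_ev[OF refl ev refl] d])
qed

lemma FR_deriv:
  assumes "FR t K h" "y \<in> K"
  shows "\<exists>D. ((\<lambda>s. h s y) has_real_derivative D) (at t)"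
proof -
  obtain L where L: "\<forall>p\<in>set L. (fst p has_real_derivative fst (snd p)) (at t) \<and> continuous_on K (snd (snd p))"
    and ev: "eventually (\<lambda>s. \<forall>y\<in>K. h s y = (\<Sum>p\<leftarrow>L. fst p s * snd (snd p) y)) (nhds t)"
    using assms(1) unfolding FR_def by blast
  have "\<forall>p\<in>set L. (fst p has_real_derivative fst (snd p)) (at t)" using L by blast
  from FR_deriv_repr[OF this ev assms(2)] show ?thesis by blast
qed

lemma DI:
  fixes a b :: "'a::euclidean_space"
  assumes "FR t (cbox a b) h"
    and "\<forall>y\<in>cbox a b. ((\<lambda>s. h s y) has_real_derivative h' y) (at t)"
  shows "((\<lambda>s. integral (cbox a b) (h s)) has_real_derivative integral (cbox a b) h') (at t)"
proof -
  obtain L where L: "\<forall>p\<in>set L. (fst p has_real_derivative fst (snd p)) (at t) \<and> continuous_on (cbox a b) (snd (snd p))"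
    and ev: "eventually (\<lambda>s. \<forall>y\<in>cbox a b. h s y = (\<Sum>p\<leftarrow>L. fst p s * snd (snd p) y)) (nhds t)"
    using assms(1) unfolding FR_def by blast
  have int: "\<forall>p\<in>set L. snd (snd p) integrable_on cbox a b"
    using L integrable_continuous by blast
  have h': "h' y = (\<Sum>p\<leftarrow>L. fst (snd p) * snd (snd p) y)" if "y \<in> cbox a b" for y
    using DERIV_unique[OF assms(2)[rule_format, OF that] FR_deriv_repr[OF _ ev that]] L by blast
  have "integral (cbox a b) h' = integral (cbox a b) (\<lambda>y. \<Sum>p\<leftarrow>L. fst (snd p) * snd (snd p) y)"
    using h' by (intro integral_cong) auto
  also have "\<dots> = (\<Sum>p\<leftarrow>L. fst (snd p) * integral (cbox a b) (snd (snd p)))"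
    using integral_sum_list[OF int, of "\<lambda>p. fst (snd p)"] by simp
  finally have I': "integral (cbox a b) h' = (\<Sum>p\<leftarrow>L. fst (snd p) * integral (cbox a b) (snd (snd p)))" .
  have ev2: "eventually (\<lambda>s. integral (cbox a b) (h s) = (\<Sum>p\<leftarrow>L. fst p s * integral (cbox a b) (snd (snd p)))) (nhds t)"
    using ev
  proof eventually_elim
    case (elim s)
    then have "integral (cbox a b) (h s) = integral (cbox a b) (\<lambda>y. \<Sum>p\<leftarrow>L. fst p s * snd (snd p) y)"
      by (intro integral_cong) auto
    also have "\<dots> = (\<Sum>p\<leftarrow>L. fst p s * integral (cbox a b) (snd (snd p)))"
      using integral_sum_list[OF int, of "\<lambda>p. fst p s"] by simp
    finally show ?case .
  qed
  have "((\<lambda>s. \<Sum>p\<leftarrow>L. fst p s * integral (cbox a b) (snd (snd p))) has_real_derivative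
          (\<Sum>p\<leftarrow>L. fst (snd p) * integral (cbox a b) (snd (snd p)))) (at t)"
    using L by (intro sum_list_deriv) (auto intro!: derivative_eq_intros)
  then show ?thesis unfolding I' using DERIV_cong_ev[OF refl ev2 refl] by simp
qed

lemma FR_const:
  assumes "continuous_on K g"
  shows "FR t K (\<lambda>s y. g y)"
  unfolding FR_def
  by (rule exI[of _ "[(\<lambda>_. 1, 0, g)]"]) (use assms in \<open>auto intro!: derivative_eq_intros\<close>)

lemma FR_zero: "FR t K (\<lambda>s y. 0)"
  unfolding FR_def by (rule exI[of _ "[]"]) auto

lemma FR_add:
  assumes "FR t K h1" "FR t K h2"
  shows "FR t K (\<lambda>s y. h1 s y + h2 s y)"
proof -
  obtain L1 where L1: "\<forall>p\<in>set L1. (fst p has_real_derivative fst (snd p)) (at t) \<and> continuous_on K (snd (snd p))"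
    and ev1: "eventually (\<lambda>s. \<forall>y\<in>K. h1 s y = (\<Sum>p\<leftarrow>L1. fst p s * snd (snd p) y)) (nhds t)"
    using assms(1) unfolding FR_def by blast
  obtain L2 where L2: "\<forall>p\<in>set L2. (fst p has_real_derivative fst (snd p)) (at t) \<and> continuous_on K (snd (snd p))"
    and ev2: "eventually (\<lambda>s. \<forall>y\<in>K. h2 s y = (\<Sum>p\<leftarrow>L2. fst p s * snd (snd p) y)) (nhds t)"
    using assms(2) unfolding FR_def by blast
  show ?thesis unfolding FR_def
  proof (rule exI[of _ "L1 @ L2"], intro conjI)
    show "\<forall>p\<in>set (L1 @ L2). (fst p has_real_derivative fst (snd p)) (at t) \<and> continuous_on K (snd (snd p))"
      using L1 L2 by auto
    show "eventually (\<lambda>s. \<forall>y\<in>K. h1 s y + h2 s y = (\<Sum>p\<leftarrow>L1 @ L2. fst p s * snd (snd p) y)) (nhds t)"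
      using ev1 ev2 by eventually_elim auto
  qed
qed

lemma sum_list_prod_concat:
  fixes f :: "'b \<Rightarrow> real" and g :: "'c \<Rightarrow> real"
  shows "(\<Sum>x\<leftarrow>L1. f x) * (\<Sum>z\<leftarrow>L2. g z) = (\<Sum>q\<leftarrow>concat (map (\<lambda>x. map (\<lambda>z. (x, z)) L2) L1). f (fst q) * g (snd q))"
  by (induction L1) (auto simp: algebra_simps sum_list_const_mult o_def)

lemma FR_mult:
  assumes "FR t K h1" "FR t K h2"
  shows "FR t K (\<lambda>s y. h1 s y * h2 s y)"
proof -
  obtain L1 where L1: "\<forall>p\<in>set L1. (fst p has_real_derivative fst (snd p)) (at t) \<and> continuous_on K (snd (snd p))"
    and ev1: "eventually (\<lambda>s. \<forall>y\<in>K. h1 s y = (\<Sum>p\<leftarrow>L1. fst p s * snd (snd p) y)) (nhds t)"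
    using assms(1) unfolding FR_def by blast
  obtain L2 where L2: "\<forall>p\<in>set L2. (fst p has_real_derivative fst (snd p)) (at t) \<and> continuous_on K (snd (snd p))"
    and ev2: "eventually (\<lambda>s. \<forall>y\<in>K. h2 s y = (\<Sum>p\<leftarrow>L2. fst p s * snd (snd p) y)) (nhds t)"
    using assms(2) unfolding FR_def by blast
  define P where "P = concat (map (\<lambda>x. map (\<lambda>z. (x, z)) L2) L1)"
  define L where "L = map (\<lambda>q. (\<lambda>s. fst (fst q) s * fst (snd q) s,
       fst (snd (fst q)) * fst (snd q) t + fst (fst q) t * fst (snd (snd q)),
       \<lambda>y. snd (snd (fst q)) y * snd (snd (snd q)) y)) P"
  have P: "set P = set L1 \<times> set L2" unfolding P_def by auto
  show ?thesis unfolding FR_def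
  proof (rule exI[of _ L], intro conjI)
    show "\<forall>p\<in>set L. (fst p has_real_derivative fst (snd p)) (at t) \<and> continuous_on K (snd (snd p))"
    proof
      fix p assume "p \<in> set L"
      then obtain q1 q2 where q: "q1 \<in> set L1" "q2 \<in> set L2"
        "p = (\<lambda>s. fst q1 s * fst q2 s, fst (snd q1) * fst q2 t + fst q1 t * fst (snd q2),
              \<lambda>y. snd (snd q1) y * snd (snd q2) y)"
        unfolding L_def using P by auto
      have "((\<lambda>s. fst q1 s * fst q2 s) has_real_derivative fst q1 t * fst (snd q2) + fst (snd q1) * fst q2 t) (at t)"
        using L1 L2 q by (intro DERIV_mult') auto
      then show "(fst p has_real_derivative fst (snd p)) (at t) \<and> continuous_on K (snd (snd p))"
        using L1 L2 q by (auto intro!: continuous_on_mult simp: add.commute)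
    qed
    show "eventually (\<lambda>s. \<forall>y\<in>K. h1 s y * h2 s y = (\<Sum>p\<leftarrow>L. fst p s * snd (snd p) y)) (nhds t)"
      using ev1 ev2
    proof eventually_elim
      case (elim s)
      show ?case
      proof
        fix y assume y: "y \<in> K"
        have "h1 s y * h2 s y = (\<Sum>p\<leftarrow>L1. fst p s * snd (snd p) y) * (\<Sum>p\<leftarrow>L2. fst p s * snd (snd p) y)"
          using elim y by simp
        also have "\<dots> = (\<Sum>q\<leftarrow>P. (fst (fst q) s * snd (snd (fst q)) y) * (fst (snd q) s * snd (snd (snd q)) y))"
          unfolding P_def by (rule sum_list_prod_concat)
        also have "\<dots> = (\<Sum>p\<leftarrow>L. fst p s * snd (snd p) y)"
          unfolding L_def by (simp add: o_def algebra_simps)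
        finally show "h1 s y * h2 s y = (\<Sum>p\<leftarrow>L. fst p s * snd (snd p) y)" .
      qed
    qed
  qed
qed

lemma FR_cong:
  assumes "FR t K h" "\<And>s y. y \<in> K \<Longrightarrow> h s y = h2 s y"
  shows "FR t K h2"
proof -
  obtain L where L: "\<forall>p\<in>set L. (fst p has_real_derivative fst (snd p)) (at t) \<and> continuous_on K (snd (snd p))"
    and ev: "eventually (\<lambda>s. \<forall>y\<in>K. h s y = (\<Sum>p\<leftarrow>L. fst p s * snd (snd p) y)) (nhds t)"
    using assms(1) unfolding FR_def by blast
  have "eventually (\<lambda>s. \<forall>y\<in>K. h2 s y = (\<Sum>p\<leftarrow>L. fst p s * snd (snd p) y)) (nhds t)"
    using ev by eventually_elim (use assms(2) in simp)
  then show ?thesis using L unfolding FR_def by blast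
qed

lemma FR_sum:
  assumes "finite A" "\<forall>m\<in>A. FR t K (h m)"
  shows "FR t K (\<lambda>s y. \<Sum>m\<in>A. h m s y)"
  using assms
proof (induction A rule: finite_induct)
  case empty then show ?case by (simp add: FR_zero)
next
  case (insert x F)
  then have "FR t K (\<lambda>s y. h x s y + (\<Sum>m\<in>F. h m s y))" by (intro FR_add) auto
  then show ?case using insert by simp
qed

lemma FR_scale:
  assumes "continuous_on K g" "FR t K h"
  shows "FR t K (\<lambda>s y. g y * h s y)"
  using FR_mult[OF FR_const[OF assms(1)] assms(2)] .

lemma FR_scale2:
  assumes "continuous_on K g" "FR t K h"
  shows "FR t K (\<lambda>s y. h s y * g y)"
  using FR_mult[OF assms(2) FR_const[OF assms(1)]] .

lemma FR_neg:
  assumes "FR t K h"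
  shows "FR t K (\<lambda>s y. - h s y)"
  using FR_scale[OF continuous_on_const[of K "-1"] assms] by simp

lemma FR_diff:
  assumes "FR t K h1" "FR t K h2"
  shows "FR t K (\<lambda>s y. h1 s y - h2 s y)"
  using FR_add[OF assms(1) FR_neg[OF assms(2)]] by simp

lemma FR_compose:
  assumes "FR t K h" "continuous_on K' \<phi>" "\<phi> ` K' \<subseteq> K"
  shows "FR t K' (\<lambda>s y. h s (\<phi> y))"
proof -
  obtain L where L: "\<forall>p\<in>set L. (fst p has_real_derivative fst (snd p)) (at t) \<and> continuous_on K (snd (snd p))"
    and ev: "eventually (\<lambda>s. \<forall>y\<in>K. h s y = (\<Sum>p\<leftarrow>L. fst p s * snd (snd p) y)) (nhds t)"
    using assms(1) unfolding FR_def by blast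
  define L' where "L' = map (\<lambda>p. (fst p, fst (snd p), \<lambda>y. snd (snd p) (\<phi> y))) L"
  show ?thesis unfolding FR_def
  proof (rule exI[of _ L'], intro conjI)
    show "\<forall>p\<in>set L'. (fst p has_real_derivative fst (snd p)) (at t) \<and> continuous_on K' (snd (snd p))"
    proof
      fix p assume "p \<in> set L'"
      then obtain q where q: "q \<in> set L" "p = (fst q, fst (snd q), \<lambda>y. snd (snd q) (\<phi> y))"
        unfolding L'_def by auto
      have "continuous_on K' (\<lambda>y. snd (snd q) (\<phi> y))"
        using continuous_on_compose2[of K "snd (snd q)" K' \<phi>] L q(1) assms(2,3) by blast
      then show "(fst p has_real_derivative fst (snd p)) (at t) \<and> continuous_on K' (snd (snd p))"
        using L q by auto
    qed
    show "eventually (\<lambda>s. \<forall>y\<in>K'. h s (\<phi> y) = (\<Sum>p\<leftarrow>L'. fst p s * snd (snd p) y)) (nhds t)"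
      using ev
    proof eventually_elim
      case (elim s)
      show ?case
      proof
        fix y assume "y \<in> K'"
        then have "\<phi> y \<in> K" using assms(3) by blast
        then show "h s (\<phi> y) = (\<Sum>p\<leftarrow>L'. fst p s * snd (snd p) y)"
          using elim unfolding L'_def by (simp add: o_def)
      qed
    qed
  qed
qed

lemma FR_mono:
  assumes "FR t K h" "K' \<subseteq> K"
  shows "FR t K' h"
proof -
  have "FR t K' (\<lambda>s y. h s ((\<lambda>y. y) y))"
    by (rule FR_compose[OF assms(1) continuous_on_id]) (use assms(2) in auto)
  then show ?thesis by simp
qed

definition Ik :: "nat \<Rightarrow> (nat \<times> nat) set" where
  "Ik k = Sigma {..k} (\<lambda>a. {..k-a})"

definition mn :: "nat \<times> nat \<Rightarrow> real \<times> real \<Rightarrow> real" where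
  "mn p y = fst y ^ fst p * snd y ^ snd p"

lemma finite_Ik[simp]: "finite (Ik k)"
  unfolding Ik_def by auto

lemma poly2_alt: "poly2 k f \<longleftrightarrow> (\<exists>c. \<forall>y. f y = (\<Sum>p\<in>Ik k. c p * mn p y))"
proof
  assume "poly2 k f"
  then obtain c where c: "\<forall>x z. f (x, z) = (\<Sum>a\<le>k. \<Sum>b\<le>k - a. c a b * x ^ a * z ^ b)"
    unfolding poly2_def by blast
  have "\<forall>y. f y = (\<Sum>p\<in>Ik k. c (fst p) (snd p) * mn p y)"
  proof
    fix y :: "real \<times> real"
    obtain x z where y: "y = (x, z)" by (cases y)
    have "f y = (\<Sum>a\<le>k. \<Sum>b\<le>k - a. c a b * x ^ a * z ^ b)" using c y by simp
    also have "\<dots> = (\<Sum>(a,b)\<in>Ik k. c a b * x ^ a * z ^ b)"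
      unfolding Ik_def by (rule sum.Sigma) auto
    also have "\<dots> = (\<Sum>p\<in>Ik k. c (fst p) (snd p) * mn p y)"
      unfolding mn_def y by (intro sum.cong) (auto simp: mult.assoc)
    finally show "f y = (\<Sum>p\<in>Ik k. c (fst p) (snd p) * mn p y)" .
  qed
  then show "\<exists>c. \<forall>y. f y = (\<Sum>p\<in>Ik k. c p * mn p y)" by (rule exI[of _ "\<lambda>p. c (fst p) (snd p)"])
next
  assume "\<exists>c. \<forall>y. f y = (\<Sum>p\<in>Ik k. c p * mn p y)"
  then obtain c where c: "\<forall>y. f y = (\<Sum>p\<in>Ik k. c p * mn p y)" by blast
  have "\<forall>x z. f (x, z) = (\<Sum>a\<le>k. \<Sum>b\<le>k - a. c (a, b) * x ^ a * z ^ b)"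
  proof (intro allI)
    fix x z :: real
    have "f (x, z) = (\<Sum>p\<in>Ik k. c p * mn p (x, z))" using c by simp
    also have "\<dots> = (\<Sum>(a,b)\<in>Ik k. c (a, b) * x ^ a * z ^ b)"
      unfolding mn_def by (intro sum.cong) (auto simp: mult.assoc)
    also have "\<dots> = (\<Sum>a\<le>k. \<Sum>b\<le>k - a. c (a, b) * x ^ a * z ^ b)"
      unfolding Ik_def by (rule sum.Sigma[symmetric]) auto
    finally show "f (x, z) = (\<Sum>a\<le>k. \<Sum>b\<le>k - a. c (a, b) * x ^ a * z ^ b)" .
  qed
  then show "poly2 k f" unfolding poly2_def by (rule exI[of _ "\<lambda>a b. c (a, b)"])
qed

lemma poly1_zero:
  fixes c :: "nat \<Rightarrow> real"
  assumes "finite X" "n < card X" "\<forall>x\<in>X. (\<Sum>i\<le>n. c i * x ^ i) = 0"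
  shows "\<forall>i\<le>n. c i = 0"
proof (rule ccontr)
  assume "\<not> (\<forall>i\<le>n. c i = 0)"
  then obtain i where i: "i \<le> n" "c i \<noteq> 0" by blast
  have "finite {z. (\<Sum>i\<le>n. c i * z ^ i) = 0}" "card {z. (\<Sum>i\<le>n. c i * z ^ i) = 0} \<le> n"
    using polyfun_roots_finite[of c i n] polyfun_roots_card[of c i n] i by auto
  moreover have "X \<subseteq> {z. (\<Sum>i\<le>n. c i * z ^ i) = 0}" using assms(3) by auto
  ultimately have "card X \<le> n" using card_mono order_trans by blast
  with assms(2) show False by simp
qed

lemma poly2_zero:
  fixes c :: "nat \<times> nat \<Rightarrow> real"
  assumes X: "finite X" "k < card X" and Z: "finite Z" "k < card Z"
    and h: "\<forall>x\<in>X. \<forall>z\<in>Z. (\<Sum>p\<in>Ik k. c p * mn p (x, z)) = 0"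
  shows "\<forall>p\<in>Ik k. c p = 0"
proof -
  have eq: "(\<Sum>p\<in>Ik k. c p * mn p (x, z)) = (\<Sum>a\<le>k. (\<Sum>b\<le>k - a. c (a, b) * z ^ b) * x ^ a)" for x z
  proof -
    have "(\<Sum>p\<in>Ik k. c p * mn p (x, z)) = (\<Sum>(a,b)\<in>Ik k. c (a, b) * z ^ b * x ^ a)"
      unfolding mn_def by (intro sum.cong) (auto simp: algebra_simps)
    also have "\<dots> = (\<Sum>a\<le>k. \<Sum>b\<le>k - a. c (a, b) * z ^ b * x ^ a)"
      unfolding Ik_def by (rule sum.Sigma[symmetric]) auto
    also have "\<dots> = (\<Sum>a\<le>k. (\<Sum>b\<le>k - a. c (a, b) * z ^ b) * x ^ a)"
      by (simp add: sum_distrib_right)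
    finally show ?thesis .
  qed
  have "\<forall>a\<le>k. (\<Sum>b\<le>k - a. c (a, b) * z ^ b) = 0" if z: "z \<in> Z" for z
    using poly1_zero[OF X, of "\<lambda>a. \<Sum>b\<le>k - a. c (a, b) * z ^ b"] h z eq by simp
  then have "\<forall>b\<le>k - a. c (a, b) = 0" if "a \<le> k" for a
    using poly1_zero[OF Z(1), of "k - a" "\<lambda>b. c (a, b)"] Z(2) that by simp
  then show ?thesis unfolding Ik_def by auto
qed

lemma mn_cont: "continuous_on S (mn p)"
  unfolding mn_def by (intro continuous_intros)

lemma poly2_repr:
  assumes "poly2 k f"
  obtains c where "f = (\<lambda>y. \<Sum>p\<in>Ik k. c p * mn p y)"
  using assms unfolding poly2_alt by fast

lemma poly2_cont: "poly2 k f \<Longrightarrow> continuous_on S f"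
  by (erule poly2_repr) (auto intro!: continuous_intros mn_cont)

lemma poly2_dx:
  assumes "poly2 k f"
  shows "((\<lambda>s. f (s, z)) has_real_derivative pdx f (x, z)) (at x)"
    and "continuous_on S (pdx f)"
proof -
  obtain c where f: "f = (\<lambda>y. \<Sum>p\<in>Ik k. c p * mn p y)" using assms by (rule poly2_repr)
  define D where "D = (\<lambda>y::real\<times>real. \<Sum>p\<in>Ik k. c p * (of_nat (fst p) * fst y ^ (fst p - 1) * snd y ^ snd p))"
  have d: "((\<lambda>s. f (s, z)) has_real_derivative D (x, z)) (at x)" for x z
    unfolding f D_def mn_def by (auto intro!: derivative_eq_intros sum.cong simp: mult_ac)
  have "pdx f = D"
    unfolding pdx_def using DERIV_imp_deriv[OF d] by auto
  then show "((\<lambda>s. f (s, z)) has_real_derivative pdx f (x, z)) (at x)"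
    and "continuous_on S (pdx f)"
    using d unfolding D_def by (auto intro!: continuous_intros)
qed

lemma poly2_dz:
  assumes "poly2 k f"
  shows "((\<lambda>s. f (x, s)) has_real_derivative pdz f (x, z)) (at z)"
    and "continuous_on S (pdz f)"
proof -
  obtain c where f: "f = (\<lambda>y. \<Sum>p\<in>Ik k. c p * mn p y)" using assms by (rule poly2_repr)
  define D where "D = (\<lambda>y::real\<times>real. \<Sum>p\<in>Ik k. c p * (fst y ^ fst p * (of_nat (snd p) * snd y ^ (snd p - 1))))"
  have d: "((\<lambda>s. f (x, s)) has_real_derivative D (x, z)) (at z)" for x z
    unfolding f D_def mn_def by (auto intro!: derivative_eq_intros sum.cong simp: mult_ac)
  have "pdz f = D"
    unfolding pdz_def using DERIV_imp_deriv[OF d] by auto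
  then show "((\<lambda>s. f (x, s)) has_real_derivative pdz f (x, z)) (at z)"
    and "continuous_on S (pdz f)"
    using d unfolding D_def by (auto intro!: continuous_intros)
qed

lemma FR_of_coeffs:
  assumes "finite I" "\<forall>p\<in>I. \<exists>D. ((\<lambda>s. c s p) has_real_derivative D) (at t)"
    "\<forall>p\<in>I. continuous_on K (g p)"
    "eventually (\<lambda>s. \<forall>y\<in>K. h s y = (\<Sum>p\<in>I. c s p * g p y)) (nhds t)"
  shows "FR t K h"
proof -
  obtain D where D: "\<forall>p\<in>I. ((\<lambda>s. c s p) has_real_derivative D p) (at t)"
    using assms(2) by metis
  obtain ls where ls: "set ls = I" "distinct ls" using finite_distinct_list[OF assms(1)] by blast
  define L where "L = map (\<lambda>p. (\<lambda>s. c s p, D p, g p)) ls"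
  show ?thesis unfolding FR_def
  proof (rule exI[of _ L], intro conjI)
    show "\<forall>p\<in>set L. (fst p has_real_derivative fst (snd p)) (at t) \<and> continuous_on K (snd (snd p))"
      unfolding L_def using D assms(3) ls by auto
    show "eventually (\<lambda>s. \<forall>y\<in>K. h s y = (\<Sum>p\<leftarrow>L. fst p s * snd (snd p) y)) (nhds t)"
      using assms(4)
    proof eventually_elim
      case (elim s)
      show ?case
      proof
        fix y assume "y \<in> K"
        then have "h s y = (\<Sum>p\<in>I. c s p * g p y)" using elim by blast
        also have "\<dots> = (\<Sum>p\<leftarrow>ls. c s p * g p y)"
          using sum.distinct_set_conv_list[OF ls(2)] ls(1) by metis
        also have "\<dots> = (\<Sum>p\<leftarrow>L. fst p s * snd (snd p) y)"
          unfolding L_def by (simp add: o_def)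
        finally show "h s y = (\<Sum>p\<leftarrow>L. fst p s * snd (snd p) y)" .
      qed
    qed
  qed
qed

lemma card_real_image: "card (real ` {..k}) = Suc k"
  by (subst card_image) (auto simp: inj_on_def)

lemma FR_poly:
  assumes ev: "eventually (\<lambda>s. poly2 k (q s)) (nhds t)"
    and dq: "\<forall>y. \<exists>D. ((\<lambda>s. q s y) has_real_derivative D) (at t)"
  shows "FR t UNIV q"
proof -
  define X where "X = real ` {..k}"
  define N where "N = X \<times> X"
  have finN: "finite N" unfolding N_def X_def by auto
  define G where "G = (\<lambda>p p'. \<Sum>y\<in>N. mn p y * mn p' y)"
  define c where "c = (\<lambda>s. SOME c. \<forall>y. q s y = (\<Sum>p\<in>Ik k. c p * mn p y))"
  define F where "F = (\<lambda>s p. \<Sum>y\<in>N. mn p y * q s y)"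
  have evc: "eventually (\<lambda>s. \<forall>y. q s y = (\<Sum>p\<in>Ik k. c s p * mn p y)) (nhds t)"
    using ev
  proof eventually_elim
    case (elim s)
    then show ?case unfolding c_def poly2_alt by (rule someI_ex)
  qed
  have inj: "\<forall>x. (\<forall>i\<in>Ik k. (\<Sum>j\<in>Ik k. G i j * x j) = 0) \<longrightarrow> (\<forall>j\<in>Ik k. x j = 0)"
  proof (intro allI impI)
    fix x :: "nat \<times> nat \<Rightarrow> real"
    assume h: "\<forall>i\<in>Ik k. (\<Sum>j\<in>Ik k. G i j * x j) = 0"
    have "0 = (\<Sum>i\<in>Ik k. x i * (\<Sum>j\<in>Ik k. G i j * x j))" using h by simp
    also have "\<dots> = (\<Sum>i\<in>Ik k. \<Sum>j\<in>Ik k. \<Sum>y\<in>N. (x i * mn i y) * (x j * mn j y))"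
      unfolding G_def by (simp add: sum_distrib_left sum_distrib_right algebra_simps)
    also have "\<dots> = (\<Sum>y\<in>N. \<Sum>i\<in>Ik k. \<Sum>j\<in>Ik k. (x i * mn i y) * (x j * mn j y))"
      by (simp add: sum.swap[of _ N])
    also have "\<dots> = (\<Sum>y\<in>N. (\<Sum>i\<in>Ik k. x i * mn i y)\<^sup>2)"
      by (simp add: power2_eq_square sum_product)
    finally have "(\<Sum>y\<in>N. (\<Sum>i\<in>Ik k. x i * mn i y)\<^sup>2) = 0" by simp
    then have "\<forall>y\<in>N. (\<Sum>i\<in>Ik k. x i * mn i y)\<^sup>2 = 0"
      using sum_nonneg_eq_0_iff[OF finN, of "\<lambda>y. (\<Sum>i\<in>Ik k. x i * mn i y)\<^sup>2"] by simp
    then have "\<forall>a\<in>X. \<forall>b\<in>X. (\<Sum>i\<in>Ik k. x i * mn i (a, b)) = 0"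
      unfolding N_def by simp
    then show "\<forall>j\<in>Ik k. x j = 0"
      using poly2_zero[of X k X x] card_real_image unfolding X_def by simp
  qed
  have evG: "eventually (\<lambda>s. \<forall>i\<in>Ik k. (\<Sum>j\<in>Ik k. G i j * c s j) = F s i) (nhds t)"
    using evc
  proof eventually_elim
    case (elim s)
    show ?case
    proof
      fix i assume "i \<in> Ik k"
      have "(\<Sum>j\<in>Ik k. G i j * c s j) = (\<Sum>j\<in>Ik k. \<Sum>y\<in>N. mn i y * (c s j * mn j y))"
        unfolding G_def by (simp add: sum_distrib_right sum_distrib_left mult_ac)
      also have "\<dots> = (\<Sum>y\<in>N. \<Sum>j\<in>Ik k. mn i y * (c s j * mn j y))"
        by (rule sum.swap)
      also have "\<dots> = F s i"
        unfolding F_def using elim by (simp add: sum_distrib_left del: split_paired_All)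
      finally show "(\<Sum>j\<in>Ik k. G i j * c s j) = F s i" .
    qed
  qed
  have dF: "\<forall>i\<in>Ik k. \<exists>D. ((\<lambda>s. F s i) has_real_derivative D) (at t)"
  proof
    fix i
    obtain D where D: "\<forall>y. ((\<lambda>s. q s y) has_real_derivative D y) (at t)" using dq by metis
    have "((\<lambda>s. F s i) has_real_derivative (\<Sum>y\<in>N. mn i y * D y)) (at t)"
      unfolding F_def using D by (auto intro!: derivative_eq_intros simp: mult.commute)
    then show "\<exists>D. ((\<lambda>s. F s i) has_real_derivative D) (at t)" by blast
  qed
  have "\<forall>j\<in>Ik k. \<exists>D. ((\<lambda>s. c s j) has_real_derivative D) (at t)"
    by (rule coeff_deriv[OF finite_Ik inj evG dF])
  then show ?thesis
    by (rule FR_of_coeffs[OF finite_Ik _ _ ]) (use evc mn_cont in auto)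
qed

lemma ftc_real:
  fixes f f' :: "real \<Rightarrow> real"
  assumes "a \<le> b" "\<forall>x\<in>{a..b}. (f has_real_derivative f' x) (at x)"
  shows "integral {a..b} f' = f b - f a"
proof -
  have "(f' has_integral (f b - f a)) {a..b}"
    using assms(2)
    by (intro fundamental_theorem_of_calculus[OF assms(1)])
       (auto simp: has_real_derivative_iff_has_vector_derivative[symmetric] intro: has_field_derivative_at_within)
  then show ?thesis by (rule integral_unique)
qed

lemma div_z:
  fixes f g :: "real \<times> real \<Rightarrow> real"
  assumes "x0 \<le> x1" "z0 \<le> z1" "continuous_on (cbox (x0, z0) (x1, z1)) g"
    and "\<forall>x\<in>{x0..x1}. \<forall>z\<in>{z0..z1}. ((\<lambda>s. f (x, s)) has_real_derivative g (x, z)) (at z)"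
  shows "integral (cbox (x0, z0) (x1, z1)) g = integral {x0..x1} (\<lambda>x. f (x, z1) - f (x, z0))"
proof -
  have "integral (cbox (x0, z0) (x1, z1)) g = integral (cbox x0 x1) (\<lambda>x. integral (cbox z0 z1) (\<lambda>z. g (x, z)))"
    by (rule integral_prod_continuous[OF assms(3)])
  also have "\<dots> = integral {x0..x1} (\<lambda>x. f (x, z1) - f (x, z0))"
    unfolding cbox_interval
    by (intro integral_cong ftc_real) (use assms(2,4) in auto)
  finally show ?thesis .
qed

lemma div_x:
  fixes f g :: "real \<times> real \<Rightarrow> real"
  assumes "x0 \<le> x1" "z0 \<le> z1" "continuous_on (cbox (x0, z0) (x1, z1)) g"
    and "\<forall>x\<in>{x0..x1}. \<forall>z\<in>{z0..z1}. ((\<lambda>s. f (s, z)) has_real_derivative g (x, z)) (at x)"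
  shows "integral (cbox (x0, z0) (x1, z1)) g = integral {z0..z1} (\<lambda>z. f (x1, z) - f (x0, z))"
proof -
  have c: "continuous_on (cbox (x0, z0) (x1, z1)) (\<lambda>(x, z). g (x, z))" using assms(3) by simp
  have "integral (cbox (x0, z0) (x1, z1)) g = integral (cbox x0 x1) (\<lambda>x. integral (cbox z0 z1) (\<lambda>z. g (x, z)))"
    by (rule integral_prod_continuous[OF assms(3)])
  also have "\<dots> = integral (cbox z0 z1) (\<lambda>z. integral (cbox x0 x1) (\<lambda>x. g (x, z)))"
    using integral_swap_continuous[of x0 z0 x1 z1 "\<lambda>x z. g (x, z)"] c by simp
  also have "\<dots> = integral {z0..z1} (\<lambda>z. f (x1, z) - f (x0, z))"
    unfolding cbox_interval
    by (intro integral_cong ftc_real) (use assms(1,4) in auto)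
  finally show ?thesis .
qed

lemma FR_if:
  assumes "P \<Longrightarrow> FR t K h1" "\<not> P \<Longrightarrow> FR t K h2"
  shows "FR t K (\<lambda>s y. if P then h1 s y else h2 s y)"
  using assms by (cases P) auto

lemma FR_deriv_cont:
  assumes "FR t K h" "\<forall>y\<in>K. ((\<lambda>s. h s y) has_real_derivative h' y) (at t)"
  shows "continuous_on K h'"
proof -
  obtain L where L: "\<forall>p\<in>set L. (fst p has_real_derivative fst (snd p)) (at t) \<and> continuous_on K (snd (snd p))"
    and ev: "eventually (\<lambda>s. \<forall>y\<in>K. h s y = (\<Sum>p\<leftarrow>L. fst p s * snd (snd p) y)) (nhds t)"
    using assms(1) unfolding FR_def by blast
  have L1: "\<forall>p\<in>set L. (fst p has_real_derivative fst (snd p)) (at t)" using L by blast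
  have h': "\<forall>y\<in>K. h' y = (\<Sum>p\<leftarrow>L. fst (snd p) * snd (snd p) y)"
    using DERIV_unique[OF assms(2)[rule_format] FR_deriv_repr[OF L1 ev]] by blast
  have c: "continuous_on K (\<lambda>y. \<Sum>p\<leftarrow>L. fst (snd p) * snd (snd p) y)"
    using L by (induction L) (auto intro!: continuous_intros)
  show ?thesis using continuous_on_cong[OF refl, of K h'] h' c by (metis (no_types, lifting))
qed

lemma partial_x:
  assumes "f differentiable (at (x, z))"
  shows "((\<lambda>s. f (s, z)) has_real_derivative pdx f (x, z)) (at x)"
proof -
  have "(\<lambda>s. (s, z)) differentiable (at x)"
    by (auto intro!: derivative_intros simp: differentiable_def)
  then have "(f \<circ> (\<lambda>s. (s, z))) differentiable (at x)"
    using differentiable_chain_at[of "\<lambda>s. (s, z)" x f] assms by auto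
  then show ?thesis
    unfolding pdx_def using DERIV_deriv_iff_real_differentiable by (simp add: o_def)
qed

lemma partial_z:
  assumes "f differentiable (at (x, z))"
  shows "((\<lambda>s. f (x, s)) has_real_derivative pdz f (x, z)) (at z)"
proof -
  have "(\<lambda>s. (x, s)) differentiable (at z)"
    by (auto intro!: derivative_intros simp: differentiable_def)
  then have "(f \<circ> (\<lambda>s. (x, s))) differentiable (at z)"
    using differentiable_chain_at[of "\<lambda>s. (x, s)" z f] assms by auto
  then show ?thesis
    unfolding pdz_def using DERIV_deriv_iff_real_differentiable by (simp add: o_def)
qed

lemma DERIV_if_const:
  "(P \<Longrightarrow> (f has_real_derivative a) (at t)) \<Longrightarrow> (\<not> P \<Longrightarrow> (g has_real_derivative b) (at t)) \<Longrightarrow>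
    ((\<lambda>s. if P then f s else g s) has_real_derivative (if P then a else b)) (at t)"
  by (cases P) auto

lemma DIc:
  assumes "FR t (cell xs zs i j) h" "\<forall>y\<in>cell xs zs i j. ((\<lambda>s. h s y) has_real_derivative h' y) (at t)"
  shows "((\<lambda>s. integral (cell xs zs i j) (h s)) has_real_derivative integral (cell xs zs i j) h') (at t)"
proof -
  have c: "cell xs zs i j = cbox (xs i, zs j) (xs (Suc i), zs (Suc j))"
    by (simp add: cell_def cbox_Pair_eq)
  show ?thesis using DI[of t _ _ h h'] assms unfolding c by blast
qed

lemma DIi:
  fixes a b :: real
  assumes "FR t {a..b} h" "\<forall>y\<in>{a..b}. ((\<lambda>s. h s y) has_real_derivative h' y) (at t)"
  shows "((\<lambda>s. integral {a..b} (h s)) has_real_derivative integral {a..b} h') (at t)"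
  using DI[of t a b h h'] assms by (simp add: cbox_interval)

definition rest2 :: "nat \<Rightarrow> nat \<Rightarrow> nat \<Rightarrow> (nat \<Rightarrow> real) \<Rightarrow> (nat \<Rightarrow> real) \<Rightarrow>
    (nat \<Rightarrow> nat \<Rightarrow> nat \<Rightarrow> nat \<Rightarrow> real \<times> real \<Rightarrow> real) \<Rightarrow>
    (nat \<Rightarrow> nat \<Rightarrow> nat \<Rightarrow> real \<times> real \<Rightarrow> real) \<Rightarrow>
    nat \<Rightarrow> nat \<Rightarrow> (nat \<Rightarrow> nat \<Rightarrow> nat \<Rightarrow> nat \<Rightarrow> real \<times> real \<Rightarrow> real) \<Rightarrow> real" where
  "rest2 Nx Nz M xs zs A v i j w =
    (let vR = (\<lambda>l y. if Suc i < Nx then v (Suc i) j l y else 0);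
         vL = (\<lambda>l y. if 0 < i then v i j l y else 0);
         vT = (\<lambda>l y. if Suc j < Nz then v i (Suc j) l y else 0);
         vB = (\<lambda>l y. if 0 < j then v i j l y else 0) in
     integral (cell xs zs i j) (\<lambda>y. \<Sum>m<M. (\<Sum>l<M. A i j m l y * v i j l y)
            * (pdx (w i j m 0) y + pdz (w i j m 1) y))
     + integral (cell xs zs i j) (\<lambda>y. \<Sum>m<M. \<Sum>d<2.
            (\<Sum>l<M. v i j l y * pd d (A i j m l) y) * w i j m d y)
     - (\<Sum>m<M. bdry xs zs i j
          (\<lambda>z. (\<Sum>l<M. A i j m l (xs (Suc i), z) * vR l (xs (Suc i), z)) * w i j m 0 (xs (Suc i), z))
          (\<lambda>z. (\<Sum>l<M. A i j m l (xs i, z) * vL l (xs i, z)) * w i j m 0 (xs i, z))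
          (\<lambda>x. (\<Sum>l<M. A i j m l (x, zs (Suc j)) * vT l (x, zs (Suc j))) * w i j m 1 (x, zs (Suc j)))
          (\<lambda>x. (\<Sum>l<M. A i j m l (x, zs j) * vB l (x, zs j)) * w i j m 1 (x, zs j))))"

lemma eq2_split:
  "eq2 Nx Nz M xs zs A v S i j w \<longleftrightarrow>
   integral (cell xs zs i j) (\<lambda>y. \<Sum>m<M. \<Sum>d<2. S i j m d y * w i j m d y) + rest2 Nx Nz M xs zs A v i j w = 0"
  unfolding eq2_def rest2_def Let_def by (simp only: add_diff_eq add.assoc)

locale sch =
  fixes Nx Nz M k :: nat
    and xs zs :: "nat \<Rightarrow> real"
    and A :: "nat \<Rightarrow> nat \<Rightarrow> nat \<Rightarrow> nat \<Rightarrow> real \<times> real \<Rightarrow> real"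
    and v v' v'' :: "real \<Rightarrow> nat \<Rightarrow> nat \<Rightarrow> nat \<Rightarrow> real \<times> real \<Rightarrow> real"
    and S :: "real \<Rightarrow> nat \<Rightarrow> nat \<Rightarrow> nat \<Rightarrow> nat \<Rightarrow> real \<times> real \<Rightarrow> real"
    and t :: real
  assumes mesh: "0 < Nx" "0 < Nz" "\<forall>i<Nx. xs i < xs (Suc i)" "\<forall>j<Nz. zs j < zs (Suc j)"
    and A_C1: "\<forall>i<Nx. \<forall>j<Nz. \<forall>m<M. \<forall>l<M. \<exists>U. open U \<and> cell xs zs i j \<subseteq> U \<and>
                 (\<forall>y\<in>U. A i j m l differentiable (at y)) \<and>
                 continuous_on U (pdx (A i j m l)) \<and> continuous_on U (pdz (A i j m l))"
    and A_sym: "\<forall>i<Nx. \<forall>j<Nz. \<forall>y\<in>cell xs zs i j. \<forall>m<M. \<forall>l<M. A i j m l y = A i j l m y"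
    and v_Vh: "\<forall>t>0. Vh Nx Nz M k (v t) \<and> Vh Nx Nz M k (v' t) \<and> Vh Nx Nz M k (v'' t)"
    and S_Vh: "\<forall>t>0. Vh2 Nx Nz M k (S t)"
    and v_deriv: "\<forall>t>0. \<forall>i<Nx. \<forall>j<Nz. \<forall>m<M. \<forall>y.
                 ((\<lambda>s. v s i j m y) has_real_derivative v' t i j m y) (at t)"
    and v'_deriv: "\<forall>t>0. \<forall>i<Nx. \<forall>j<Nz. \<forall>m<M. \<forall>y.
                 ((\<lambda>s. v' s i j m y) has_real_derivative v'' t i j m y) (at t)"
    and scheme1: "\<forall>t>0. \<forall>i<Nx. \<forall>j<Nz. \<forall>p. Vh Nx Nz M k p \<longrightarrow>
                 eq1 Nx Nz M xs zs A (v'' t) (S t) i j p"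
    and scheme2: "\<forall>t>0. \<forall>i<Nx. \<forall>j<Nz. \<forall>w. Vh2 Nx Nz M k w \<longrightarrow>
                 eq2 Nx Nz M xs zs A (v t) (S t) i j w"
    and tpos: "0 < t"
begin

lemma cell_mem: "y \<in> cell xs zs i j \<longleftrightarrow> xs i \<le> fst y \<and> fst y \<le> xs (Suc i) \<and> zs j \<le> snd y \<and> snd y \<le> zs (Suc j)"
  by (cases y) (auto simp: cell_def)

lemma ev_pos: "eventually (\<lambda>s. 0 < s) (nhds t)"
  using eventually_nhds_in_open[of "{0<..}" t] tpos by auto

lemma A_facts:
  assumes "i < Nx" "j < Nz" "m < M" "l < M"
  shows "continuous_on (cell xs zs i j) (A i j m l)"
    and "continuous_on (cell xs zs i j) (pdx (A i j m l))"
    and "continuous_on (cell xs zs i j) (pdz (A i j m l))"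
    and "(x, z) \<in> cell xs zs i j \<Longrightarrow> ((\<lambda>s. A i j m l (s, z)) has_real_derivative pdx (A i j m l) (x, z)) (at x)"
    and "(x, z) \<in> cell xs zs i j \<Longrightarrow> ((\<lambda>s. A i j m l (x, s)) has_real_derivative pdz (A i j m l) (x, z)) (at z)"
proof -
  have "\<exists>U. open U \<and> cell xs zs i j \<subseteq> U \<and> (\<forall>y\<in>U. A i j m l differentiable (at y)) \<and>
                 continuous_on U (pdx (A i j m l)) \<and> continuous_on U (pdz (A i j m l))"
    using A_C1 assms by simp
  then obtain U where U: "open U" "cell xs zs i j \<subseteq> U" "\<forall>y\<in>U. A i j m l differentiable (at y)"
    "continuous_on U (pdx (A i j m l))" "continuous_on U (pdz (A i j m l))"
    by blast
  have "continuous_on U (A i j m l)"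
    using U(3) by (intro differentiable_imp_continuous_on differentiable_at_imp_differentiable_on) auto
  then show "continuous_on (cell xs zs i j) (A i j m l)"
    using U(2) continuous_on_subset by blast
  show "continuous_on (cell xs zs i j) (pdx (A i j m l))" "continuous_on (cell xs zs i j) (pdz (A i j m l))"
    using U(2,4,5) continuous_on_subset by blast+
  show "(x, z) \<in> cell xs zs i j \<Longrightarrow> ((\<lambda>s. A i j m l (s, z)) has_real_derivative pdx (A i j m l) (x, z)) (at x)"
    using U(2,3) partial_x by (meson subsetD)
  show "(x, z) \<in> cell xs zs i j \<Longrightarrow> ((\<lambda>s. A i j m l (x, s)) has_real_derivative pdz (A i j m l) (x, z)) (at z)"
    using U(2,3) partial_z by (meson subsetD)
qed

lemma cont_comp:
  assumes "continuous_on C f" "continuous_on K \<phi>" "\<phi> ` K \<subseteq> C"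
  shows "continuous_on K (\<lambda>y. f (\<phi> y))"
  using continuous_on_compose2[OF assms(1,2,3)] .

lemma contA:
  assumes "i < Nx" "j < Nz" "m < M" "l < M" "continuous_on K \<phi>" "\<phi> ` K \<subseteq> cell xs zs i j"
  shows "continuous_on K (\<lambda>y. A i j m l (\<phi> y))"
    and "continuous_on K (\<lambda>y. pdx (A i j m l) (\<phi> y))"
    and "continuous_on K (\<lambda>y. pdz (A i j m l) (\<phi> y))"
    and "d < 2 \<Longrightarrow> continuous_on K (\<lambda>y. pd d (A i j m l) (\<phi> y))"
  using cont_comp[OF A_facts(1)[OF assms(1-4)] assms(5,6)]
    cont_comp[OF A_facts(2)[OF assms(1-4)] assms(5,6)]
    cont_comp[OF A_facts(3)[OF assms(1-4)] assms(5,6)]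
  by (auto simp: pd_def)

lemma contP:
  assumes "poly2 k f" "continuous_on K \<phi>"
  shows "continuous_on K (\<lambda>y. f (\<phi> y))"
    and "continuous_on K (\<lambda>y. pdx f (\<phi> y))"
    and "continuous_on K (\<lambda>y. pdz f (\<phi> y))"
    and "continuous_on K (\<lambda>y. pd d f (\<phi> y))"
  using cont_comp[OF poly2_cont[OF assms(1)] assms(2) subset_UNIV]
    cont_comp[OF poly2_dx(2)[OF assms(1)] assms(2) subset_UNIV]
    cont_comp[OF poly2_dz(2)[OF assms(1)] assms(2) subset_UNIV]
  by (auto simp: pd_def)

lemma pv: "0 < s \<Longrightarrow> i < Nx \<Longrightarrow> j < Nz \<Longrightarrow> l < M \<Longrightarrow> poly2 k (v s i j l)"
  and pv': "0 < s \<Longrightarrow> i < Nx \<Longrightarrow> j < Nz \<Longrightarrow> l < M \<Longrightarrow> poly2 k (v' s i j l)"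
  and pv'': "0 < s \<Longrightarrow> i < Nx \<Longrightarrow> j < Nz \<Longrightarrow> l < M \<Longrightarrow> poly2 k (v'' s i j l)"
  using v_Vh unfolding Vh_def by blast+

lemma pS: "0 < s \<Longrightarrow> i < Nx \<Longrightarrow> j < Nz \<Longrightarrow> m < M \<Longrightarrow> d < 2 \<Longrightarrow> poly2 k (S s i j m d)"
  using S_Vh unfolding Vh2_def by blast

lemma FRv:
  assumes "i < Nx" "j < Nz" "l < M" "continuous_on K \<phi>"
  shows "FR t K (\<lambda>s y. v s i j l (\<phi> y))"
proof -
  have "eventually (\<lambda>s. poly2 k (v s i j l)) (nhds t)"
    using ev_pos by eventually_elim (use pv assms in blast)
  moreover have "\<forall>y. \<exists>D. ((\<lambda>s. v s i j l y) has_real_derivative D) (at t)"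
    using v_deriv tpos assms by blast
  ultimately have "FR t UNIV (\<lambda>s. v s i j l)" by (rule FR_poly)
  then show ?thesis using FR_compose[OF _ assms(4)] by blast
qed

lemma FRv':
  assumes "i < Nx" "j < Nz" "l < M" "continuous_on K \<phi>"
  shows "FR t K (\<lambda>s y. v' s i j l (\<phi> y))"
proof -
  have "eventually (\<lambda>s. poly2 k (v' s i j l)) (nhds t)"
    using ev_pos by eventually_elim (use pv' assms in blast)
  moreover have "\<forall>y. \<exists>D. ((\<lambda>s. v' s i j l y) has_real_derivative D) (at t)"
    using v'_deriv tpos assms by blast
  ultimately have "FR t UNIV (\<lambda>s. v' s i j l)" by (rule FR_poly)
  then show ?thesis using FR_compose[OF _ assms(4)] by blast
qed

lemma dv: "i < Nx \<Longrightarrow> j < Nz \<Longrightarrow> l < M \<Longrightarrow> ((\<lambda>s. v s i j l y) has_real_derivative v' t i j l y) (at t)"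
  using v_deriv tpos by blast

lemma dv': "i < Nx \<Longrightarrow> j < Nz \<Longrightarrow> l < M \<Longrightarrow> ((\<lambda>s. v' s i j l y) has_real_derivative v'' t i j l y) (at t)"
  using v'_deriv tpos by blast

end

context sch begin

lemma xle: "i < Nx \<Longrightarrow> xs i \<le> xs (Suc i)" and zle: "j < Nz \<Longrightarrow> zs j \<le> zs (Suc j)"
  using mesh by (auto intro: less_imp_le)

lemma img_cell_id: "(\<lambda>y. y) ` cell xs zs i j \<subseteq> cell xs zs i j" by simp

lemma img_R: "i < Nx \<Longrightarrow> (\<lambda>z. (xs (Suc i), z)) ` {zs j..zs (Suc j)} \<subseteq> cell xs zs i j"
  and img_L: "i < Nx \<Longrightarrow> (\<lambda>z. (xs i, z)) ` {zs j..zs (Suc j)} \<subseteq> cell xs zs i j"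
  and img_T: "j < Nz \<Longrightarrow> (\<lambda>x. (x, zs (Suc j))) ` {xs i..xs (Suc i)} \<subseteq> cell xs zs i j"
  and img_B: "j < Nz \<Longrightarrow> (\<lambda>x. (x, zs j)) ` {xs i..xs (Suc i)} \<subseteq> cell xs zs i j"
  using xle zle by (auto simp: cell_def)

lemmas img_lemmas = img_cell_id img_R img_L img_T img_B

lemma rest_deriv:
  assumes ij: "i < Nx" "j < Nz" and w: "Vh2 Nx Nz M k w"
  shows "((\<lambda>s. rest2 Nx Nz M xs zs A (v s) i j w) has_real_derivative rest2 Nx Nz M xs zs A (v' t) i j w) (at t)"
proof -
  have pw: "\<And>m d. m < M \<Longrightarrow> d < 2 \<Longrightarrow> poly2 k (w i j m d)" using w ij unfolding Vh2_def by blast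
  have cw1: "\<And>m d K \<phi>. m < M \<Longrightarrow> d < 2 \<Longrightarrow> continuous_on K \<phi> \<Longrightarrow> continuous_on K (\<lambda>y. w i j m d (\<phi> y))"
    and cw2: "\<And>m d K \<phi>. m < M \<Longrightarrow> d < 2 \<Longrightarrow> continuous_on K \<phi> \<Longrightarrow> continuous_on K (\<lambda>y. pdx (w i j m d) (\<phi> y))"
    and cw3: "\<And>m d K \<phi>. m < M \<Longrightarrow> d < 2 \<Longrightarrow> continuous_on K \<phi> \<Longrightarrow> continuous_on K (\<lambda>y. pdz (w i j m d) (\<phi> y))"
    using contP pw by blast+
  show ?thesis
    unfolding rest2_def Let_def bdry_def
    apply (intro DERIV_diff DERIV_add DERIV_sum DIc DIi)
    using ij
    apply (auto intro!: derivative_eq_intros dv DERIV_if_const sum.cong simp: mult_ac)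
    apply (auto intro!: FR_sum FR_mult FR_add FR_if FR_const FRv contA cw1 cw2 cw3 img_lemmas continuous_intros)
    done
qed


lemma cell_cbox: "cell xs zs i j = cbox (xs i, zs j) (xs (Suc i), zs (Suc j))"
  by (simp add: cell_def cbox_Pair_eq)

lemma int_lin:
  fixes f :: "'q \<Rightarrow> real \<times> real \<Rightarrow> real"
  assumes "finite I" "\<forall>q\<in>I. continuous_on (cell xs zs i j) (f q)"
  shows "integral (cell xs zs i j) (\<lambda>y. \<Sum>q\<in>I. c q * f q y) = (\<Sum>q\<in>I. c q * integral (cell xs zs i j) (f q))"
proof -
  have "\<forall>q\<in>I. (\<lambda>y. c q * f q y) integrable_on cell xs zs i j"
    using assms(2) unfolding cell_cbox by (auto intro!: integrable_continuous continuous_intros)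
  then have "integral (cell xs zs i j) (\<lambda>y. \<Sum>q\<in>I. c q * f q y) = (\<Sum>q\<in>I. integral (cell xs zs i j) (\<lambda>y. c q * f q y))"
    using integral_sum[OF assms(1), of "\<lambda>q y. c q * f q y"] by simp
  also have "\<dots> = (\<Sum>q\<in>I. c q * integral (cell xs zs i j) (f q))"
    by simp
  finally show ?thesis .
qed

lemma grid_pts:
  fixes a b :: real
  assumes "a < b"
  shows "\<exists>X. finite X \<and> card X = Suc k \<and> X \<subseteq> {a..b}"
proof -
  define h where "h = (b - a) / (Suc k)"
  have h: "0 < h" using assms unfolding h_def by simp
  define X where "X = (\<lambda>r. a + real r * h) ` {..k}"
  have "inj_on (\<lambda>r. a + real r * h) {..k}" using h by (auto simp: inj_on_def)
  then have "card X = Suc k" unfolding X_def by (simp add: card_image)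
  moreover have "X \<subseteq> {a..b}"
  proof
    fix x assume "x \<in> X"
    then obtain r where r: "r \<le> k" "x = a + real r * h" unfolding X_def by auto
    have "real r * h \<le> real (Suc k) * h" using r(1) h by (intro mult_right_mono) auto
    also have "\<dots> = b - a" unfolding h_def by simp
    finally show "x \<in> {a..b}" using r h by auto
  qed
  ultimately show ?thesis unfolding X_def by blast
qed

lemma sum_delta2:
  fixes a :: "nat \<Rightarrow> nat \<Rightarrow> real"
  assumes "m < M" "d < (2::nat)"
  shows "(\<Sum>m'<M. \<Sum>d'<2. (if m' = m \<and> d' = d then a m' d' else 0)) = a m d"
proof -
  have "(\<Sum>m'<M. \<Sum>d'<2. (if m' = m \<and> d' = d then a m' d' else 0)) =
        (\<Sum>m'<M. if m' = m then (\<Sum>d'<2. (if d' = d then a m' d' else 0)) else 0)"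
    by (intro sum.cong) auto
  also have "\<dots> = a m d" using assms by simp
  finally show ?thesis .
qed


lemma mn_poly2: "p \<in> Ik k \<Longrightarrow> poly2 k (mn p)"
  unfolding poly2_alt
proof (rule exI[of _ "\<lambda>q. if q = p then 1 else 0"], rule allI)
  fix y assume p: "p \<in> Ik k"
  have "(\<Sum>q\<in>Ik k. (if q = p then 1 else 0) * mn q y) = (\<Sum>q\<in>Ik k. if q = p then mn q y else 0)"
    by (rule sum.cong) auto
  also have "\<dots> = mn p y" using p by simp
  finally show "mn p y = (\<Sum>q\<in>Ik k. (if q = p then 1 else 0) * mn q y)" by simp
qed

lemma zero_poly2: "poly2 k (\<lambda>y. 0)"
  unfolding poly2_alt by (rule exI[of _ "\<lambda>q. 0"]) simp

lemma FRS:
  assumes ij: "i < Nx" "j < Nz" "m < M" "d < 2"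
  shows "FR t UNIV (\<lambda>s. S s i j m d)"
proof -
  let ?K = "cell xs zs i j"
  define c where "c = (\<lambda>s. SOME c. \<forall>y. S s i j m d y = (\<Sum>p\<in>Ik k. c p * mn p y))"
  have evc: "eventually (\<lambda>s. \<forall>y. S s i j m d y = (\<Sum>p\<in>Ik k. c s p * mn p y)) (nhds t)"
    using ev_pos
  proof eventually_elim
    case (elim s)
    then have "poly2 k (S s i j m d)" using pS ij by blast
    then show ?case unfolding c_def poly2_alt by (rule someI_ex)
  qed
  define G where "G = (\<lambda>p q. integral ?K (\<lambda>y. mn p y * mn q y))"
  define wp where "wp = (\<lambda>p i' j' m' d'. if i' = i \<and> j' = j \<and> m' = m \<and> d' = d then mn p else (\<lambda>y. 0))"
  define F where "F = (\<lambda>s p. integral ?K (\<lambda>y. S s i j m d y * mn p y))"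
  have wpV: "Vh2 Nx Nz M k (wp p)" if "p \<in> Ik k" for p
    unfolding Vh2_def wp_def using mn_poly2[OF that] zero_poly2 by auto
  have contmn: "\<And>p. continuous_on ?K (mn p)" by (rule mn_cont)
  have evF: "eventually (\<lambda>s. \<forall>p\<in>Ik k. F s p = - rest2 Nx Nz M xs zs A (v s) i j (wp p)) (nhds t)"
    using ev_pos
  proof eventually_elim
    case (elim s)
    show ?case
    proof
      fix p assume p: "p \<in> Ik k"
      have "eq2 Nx Nz M xs zs A (v s) (S s) i j (wp p)"
        using scheme2 elim ij wpV[OF p] by blast
      then have e: "integral ?K (\<lambda>y. \<Sum>m'<M. \<Sum>d'<2. S s i j m' d' y * wp p i j m' d' y)
          + rest2 Nx Nz M xs zs A (v s) i j (wp p) = 0"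
        unfolding eq2_split .
      have "(\<lambda>y. \<Sum>m'<M. \<Sum>d'<2. S s i j m' d' y * wp p i j m' d' y) = (\<lambda>y. S s i j m d y * mn p y)"
      proof
        fix y
        have "(\<Sum>m'<M. \<Sum>d'<2. S s i j m' d' y * wp p i j m' d' y)
            = (\<Sum>m'<M. \<Sum>d'<2. (if m' = m \<and> d' = d then S s i j m' d' y * mn p y else 0))"
          unfolding wp_def by (intro sum.cong) auto
        also have "\<dots> = S s i j m d y * mn p y"
          by (rule sum_delta2[OF ij(3,4), of "\<lambda>m' d'. S s i j m' d' y * mn p y"])
        finally show "(\<Sum>m'<M. \<Sum>d'<2. S s i j m' d' y * wp p i j m' d' y) = S s i j m d y * mn p y" .
      qed
      then show "F s p = - rest2 Nx Nz M xs zs A (v s) i j (wp p)"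
        using e unfolding F_def by simp
    qed
  qed
  have dF: "\<forall>p\<in>Ik k. \<exists>D. ((\<lambda>s. F s p) has_real_derivative D) (at t)"
  proof
    fix p assume p: "p \<in> Ik k"
    have d: "((\<lambda>s. - rest2 Nx Nz M xs zs A (v s) i j (wp p)) has_real_derivative
           - rest2 Nx Nz M xs zs A (v' t) i j (wp p)) (at t)"
      using rest_deriv[OF ij(1,2) wpV[OF p]] by (rule DERIV_minus)
    have ev: "eventually (\<lambda>s. F s p = - rest2 Nx Nz M xs zs A (v s) i j (wp p)) (nhds t)"
      using evF by eventually_elim (use p in blast)
    show "\<exists>D. ((\<lambda>s. F s p) has_real_derivative D) (at t)"
      using iffD2[OF DERIV_cong_ev[OF refl ev refl] d] by blast
  qed
  have evG: "eventually (\<lambda>s. \<forall>p\<in>Ik k. (\<Sum>q\<in>Ik k. G p q * c s q) = F s p) (nhds t)"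
    using evc
  proof eventually_elim
    case (elim s)
    show ?case
    proof
      fix p assume p: "p \<in> Ik k"
      have "(\<Sum>q\<in>Ik k. G p q * c s q) = (\<Sum>q\<in>Ik k. c s q * integral ?K (\<lambda>y. mn p y * mn q y))"
        unfolding G_def by (simp add: mult.commute)
      also have "\<dots> = integral ?K (\<lambda>y. \<Sum>q\<in>Ik k. c s q * (mn p y * mn q y))"
        by (rule int_lin[symmetric]) (auto intro!: continuous_intros mn_cont)
      also have "\<dots> = F s p"
        unfolding F_def using elim by (intro integral_cong) (simp add: sum_distrib_left sum_distrib_right mult_ac del: split_paired_All)
      finally show "(\<Sum>q\<in>Ik k. G p q * c s q) = F s p" .
    qed
  qed
  have inj: "\<forall>x. (\<forall>p\<in>Ik k. (\<Sum>q\<in>Ik k. G p q * x q) = 0) \<longrightarrow> (\<forall>q\<in>Ik k. x q = 0)"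
  proof (intro allI impI)
    fix x :: "nat \<times> nat \<Rightarrow> real"
    assume h: "\<forall>p\<in>Ik k. (\<Sum>q\<in>Ik k. G p q * x q) = 0"
    define P where "P = (\<lambda>y. \<Sum>q\<in>Ik k. x q * mn q y)"
    have contP': "continuous_on ?K P" unfolding P_def by (auto intro!: continuous_intros mn_cont)
    have Gx: "(\<Sum>q\<in>Ik k. G p q * x q) = integral ?K (\<lambda>y. mn p y * P y)" for p
    proof -
      have "(\<Sum>q\<in>Ik k. G p q * x q) = (\<Sum>q\<in>Ik k. x q * integral ?K (\<lambda>y. mn p y * mn q y))"
        unfolding G_def by (simp add: mult.commute)
      also have "\<dots> = integral ?K (\<lambda>y. \<Sum>q\<in>Ik k. x q * (mn p y * mn q y))"
        by (rule int_lin[symmetric]) (auto intro!: continuous_intros mn_cont)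
      also have "\<dots> = integral ?K (\<lambda>y. mn p y * P y)"
        unfolding P_def by (simp add: sum_distrib_left mult_ac)
      finally show ?thesis .
    qed
    have "0 = (\<Sum>p\<in>Ik k. x p * (\<Sum>q\<in>Ik k. G p q * x q))" using h by simp
    also have "\<dots> = (\<Sum>p\<in>Ik k. x p * integral ?K (\<lambda>y. mn p y * P y))" using Gx by simp
    also have "\<dots> = integral ?K (\<lambda>y. \<Sum>p\<in>Ik k. x p * (mn p y * P y))"
      by (rule int_lin[symmetric]) (auto intro!: continuous_intros mn_cont contP')
    also have "\<dots> = integral ?K (\<lambda>y. (P y)\<^sup>2)"
      unfolding P_def by (simp add: sum_distrib_right power2_eq_square mult_ac)
    finally have I0: "integral ?K (\<lambda>y. (P y)\<^sup>2) = 0" by simp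
    have ne: "box (xs i, zs j) (xs (Suc i), zs (Suc j)) \<noteq> {}"
      using mesh ij by (auto simp: box_ne_empty inner_Pair_0 Basis_prod_def)
    have P0: "\<forall>y\<in>?K. (P y)\<^sup>2 = 0"
      using I0 integral_cbox_eq_0_iff[where a="(xs i, zs j)" and b="(xs (Suc i), zs (Suc j))" and f="\<lambda>y. (P y)\<^sup>2"]
        contP' ne unfolding cell_cbox by (auto intro!: continuous_intros)
    obtain X where X: "finite X" "card X = Suc k" "X \<subseteq> {xs i..xs (Suc i)}"
      using grid_pts[of "xs i" "xs (Suc i)"] mesh ij by auto
    obtain Z where Z: "finite Z" "card Z = Suc k" "Z \<subseteq> {zs j..zs (Suc j)}"
      using grid_pts[of "zs j" "zs (Suc j)"] mesh ij by auto
    have "\<forall>a\<in>X. \<forall>b\<in>Z. (\<Sum>q\<in>Ik k. x q * mn q (a, b)) = 0"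
    proof (intro ballI)
      fix a b assume "a \<in> X" "b \<in> Z"
      then have "(a, b) \<in> ?K" using X Z by (auto simp: cell_def)
      then show "(\<Sum>q\<in>Ik k. x q * mn q (a, b)) = 0" using P0 unfolding P_def by simp
    qed
    then show "\<forall>q\<in>Ik k. x q = 0"
      using poly2_zero[of X k Z x] X Z by simp
  qed
  have "\<forall>q\<in>Ik k. \<exists>D. ((\<lambda>s. c s q) has_real_derivative D) (at t)"
    by (rule coeff_deriv[OF finite_Ik inj evG dF])
  then show ?thesis
    by (rule FR_of_coeffs[OF finite_Ik _ _ ]) (use evc mn_cont in auto)
qed

end

context sch begin

definition Sd :: "nat \<Rightarrow> nat \<Rightarrow> nat \<Rightarrow> nat \<Rightarrow> real \<times> real \<Rightarrow> real" where
  "Sd i j m d y = (SOME D. ((\<lambda>s. S s i j m d y) has_real_derivative D) (at t))"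

lemma dS:
  assumes "i < Nx" "j < Nz" "m < M" "d < 2"
  shows "((\<lambda>s. S s i j m d y) has_real_derivative Sd i j m d y) (at t)"
  unfolding Sd_def using FR_deriv[OF FRS[OF assms] UNIV_I] by (rule someI_ex)

lemma Sd_cont:
  assumes "i < Nx" "j < Nz" "m < M" "d < 2" "continuous_on K \<phi>"
  shows "continuous_on K (\<lambda>y. Sd i j m d (\<phi> y))"
proof -
  have "continuous_on UNIV (Sd i j m d)"
    using FR_deriv_cont[OF FRS[OF assms(1-4)]] dS[OF assms(1-4)] by blast
  then show ?thesis using cont_comp[OF _ assms(5)] by blast
qed

lemma FRS':
  assumes "i < Nx" "j < Nz" "m < M" "d < 2" "continuous_on K \<phi>"
  shows "FR t K (\<lambda>s y. S s i j m d (\<phi> y))"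
  using FR_compose[OF FRS[OF assms(1-4)] assms(5)] by blast

lemma contV': "i < Nx \<Longrightarrow> j < Nz \<Longrightarrow> l < M \<Longrightarrow> continuous_on K \<phi> \<Longrightarrow> continuous_on K (\<lambda>y. v' t i j l (\<phi> y))"
  by (rule contP(1)[OF pv'[OF tpos]])
lemma contV'x: "i < Nx \<Longrightarrow> j < Nz \<Longrightarrow> l < M \<Longrightarrow> continuous_on K \<phi> \<Longrightarrow> continuous_on K (\<lambda>y. pdx (v' t i j l) (\<phi> y))"
  by (rule contP(2)[OF pv'[OF tpos]])
lemma contV'z: "i < Nx \<Longrightarrow> j < Nz \<Longrightarrow> l < M \<Longrightarrow> continuous_on K \<phi> \<Longrightarrow> continuous_on K (\<lambda>y. pdz (v' t i j l) (\<phi> y))"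
  by (rule contP(3)[OF pv'[OF tpos]])
lemma contV'': "i < Nx \<Longrightarrow> j < Nz \<Longrightarrow> l < M \<Longrightarrow> continuous_on K \<phi> \<Longrightarrow> continuous_on K (\<lambda>y. v'' t i j l (\<phi> y))"
  by (rule contP(1)[OF pv''[OF tpos]])
lemma contSt: "i < Nx \<Longrightarrow> j < Nz \<Longrightarrow> m < M \<Longrightarrow> d < 2 \<Longrightarrow> continuous_on K \<phi> \<Longrightarrow> continuous_on K (\<lambda>y. S t i j m d (\<phi> y))"
  by (rule contP(1)[OF pS[OF tpos]])
lemma contStx: "i < Nx \<Longrightarrow> j < Nz \<Longrightarrow> m < M \<Longrightarrow> d < 2 \<Longrightarrow> continuous_on K \<phi> \<Longrightarrow> continuous_on K (\<lambda>y. pdx (S t i j m d) (\<phi> y))"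
  by (rule contP(2)[OF pS[OF tpos]])
lemma contStz: "i < Nx \<Longrightarrow> j < Nz \<Longrightarrow> m < M \<Longrightarrow> d < 2 \<Longrightarrow> continuous_on K \<phi> \<Longrightarrow> continuous_on K (\<lambda>y. pdz (S t i j m d) (\<phi> y))"
  by (rule contP(3)[OF pS[OF tpos]])

lemma T2:
  assumes ij: "i < Nx" "j < Nz"
  shows "integral (cell xs zs i j) (\<lambda>y. \<Sum>m<M. \<Sum>d<2. Sd i j m d y * S t i j m d y)
       = - rest2 Nx Nz M xs zs A (v' t) i j (S t)"
proof -
  have VS: "Vh2 Nx Nz M k (S t)" using S_Vh tpos by blast
  have ev: "eventually (\<lambda>s. integral (cell xs zs i j) (\<lambda>y. \<Sum>m<M. \<Sum>d<2. S s i j m d y * S t i j m d y)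
       = - rest2 Nx Nz M xs zs A (v s) i j (S t)) (nhds t)"
    using ev_pos
  proof eventually_elim
    case (elim s)
    then have "eq2 Nx Nz M xs zs A (v s) (S s) i j (S t)" using scheme2 ij VS by blast
    then show ?case unfolding eq2_split by simp
  qed
  have d1: "((\<lambda>s. integral (cell xs zs i j) (\<lambda>y. \<Sum>m<M. \<Sum>d<2. S s i j m d y * S t i j m d y)) has_real_derivative
      integral (cell xs zs i j) (\<lambda>y. \<Sum>m<M. \<Sum>d<2. Sd i j m d y * S t i j m d y)) (at t)"
    apply (rule DIc)
    using ij
    apply (auto intro!: FR_sum FR_mult FR_const FRS' contSt continuous_on_id)[1]
    using ij
    apply (auto intro!: derivative_eq_intros dS)
    done
  have d2: "((\<lambda>s. - rest2 Nx Nz M xs zs A (v s) i j (S t)) has_real_derivative - rest2 Nx Nz M xs zs A (v' t) i j (S t)) (at t)"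
    using rest_deriv[OF ij VS] by (rule DERIV_minus)
  have d1': "((\<lambda>s. - rest2 Nx Nz M xs zs A (v s) i j (S t)) has_real_derivative
      integral (cell xs zs i j) (\<lambda>y. \<Sum>m<M. \<Sum>d<2. Sd i j m d y * S t i j m d y)) (at t)"
    using iffD1[OF DERIV_cong_ev[OF refl ev refl] d1] .
  show ?thesis using DERIV_unique[OF d1' d2] .
qed

lemma energy_deriv:
  "((\<lambda>s. energy Nx Nz M xs zs (v' s) (S s)) has_real_derivative
     (\<Sum>i<Nx. \<Sum>j<Nz. integral (cell xs zs i j) (\<lambda>y.
        (\<Sum>m<M. v'' t i j m y * v' t i j m y + v' t i j m y * v'' t i j m y)
      + (\<Sum>m<M. \<Sum>d<2. Sd i j m d y * S t i j m d y + S t i j m d y * Sd i j m d y)))) (at t)"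
  unfolding energy_def
  apply (intro DERIV_sum DIc)
   apply (auto intro!: FR_sum FR_mult FR_add FRS' FRv' continuous_on_id)[1]
  apply (auto intro!: derivative_eq_intros dS dv')
  done

end

lemma bdry_sum:
  fixes fR fL fT fB :: "nat \<Rightarrow> real \<Rightarrow> real"
  assumes "\<forall>m<M. continuous_on {zs j..zs (Suc j)} (fR m) \<and> continuous_on {zs j..zs (Suc j)} (fL m) \<and>
                continuous_on {xs i..xs (Suc i)} (fT m) \<and> continuous_on {xs i..xs (Suc i)} (fB m)"
  shows "(\<Sum>m<M. bdry xs zs i j (fR m) (fL m) (fT m) (fB m)) =
     bdry xs zs i j (\<lambda>z. \<Sum>m<M. fR m z) (\<lambda>z. \<Sum>m<M. fL m z) (\<lambda>x. \<Sum>m<M. fT m x) (\<lambda>x. \<Sum>m<M. fB m x)"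
proof -
  have i: "\<And>f :: nat \<Rightarrow> real \<Rightarrow> real. \<And>a b. (\<forall>m<M. continuous_on {a..b} (f m)) \<Longrightarrow>
      integral {a..b} (\<lambda>z. \<Sum>m<M. f m z) = (\<Sum>m<M. integral {a..b} (f m))"
    by (rule integral_sum) (auto intro: integrable_continuous_interval)
  show ?thesis unfolding bdry_def
    using i[where f=fR] i[where f=fL] i[where f=fT] i[where f=fB] assms by (simp add: sum.distrib sum_subtractf)
qed

lemma bdry_comb:
  fixes a1 a2 p b1 b2 q c1 c2 r d1 d2 u :: "real \<Rightarrow> real"
  assumes Z: "continuous_on {zs j..zs (Suc j)} a1" "continuous_on {zs j..zs (Suc j)} a2" "continuous_on {zs j..zs (Suc j)} p"
     "continuous_on {zs j..zs (Suc j)} b1" "continuous_on {zs j..zs (Suc j)} b2" "continuous_on {zs j..zs (Suc j)} q"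
    and X: "continuous_on {xs i..xs (Suc i)} c1" "continuous_on {xs i..xs (Suc i)} c2" "continuous_on {xs i..xs (Suc i)} r"
     "continuous_on {xs i..xs (Suc i)} d1" "continuous_on {xs i..xs (Suc i)} d2" "continuous_on {xs i..xs (Suc i)} u"
  shows "bdry xs zs i j a1 b1 c1 d1 + bdry xs zs i j a2 b2 c2 d2
      - (integral {zs j..zs (Suc j)} (\<lambda>z. p z - q z) + integral {xs i..xs (Suc i)} (\<lambda>x. r x - u x))
    = bdry xs zs i j (\<lambda>z. a1 z + a2 z - p z) (\<lambda>z. b1 z + b2 z - q z) (\<lambda>x. c1 x + c2 x - r x) (\<lambda>x. d1 x + d2 x - u x)"
proof -
  have I: "\<And>f :: real \<Rightarrow> real. \<And>a b. continuous_on {a..b} f \<Longrightarrow> f integrable_on {a..b}"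
    by (rule integrable_continuous_interval)
  have lin3: "integral {a..b} (\<lambda>z. f z + g z - h z) = integral {a..b} f + integral {a..b} g - integral {a..b} h"
    if "continuous_on {a..b} f" "continuous_on {a..b} g" "continuous_on {a..b} h" for f g h :: "real \<Rightarrow> real" and a b
    using that by (simp add: integral_add integral_diff I integrable_add)
  have lin2: "integral {a..b} (\<lambda>z. f z - h z) = integral {a..b} f - integral {a..b} h"
    if "continuous_on {a..b} f" "continuous_on {a..b} h" for f h :: "real \<Rightarrow> real" and a b
    using that by (simp add: integral_diff I)
  show ?thesis unfolding bdry_def
    using lin3[OF Z(1-3)] lin3[OF Z(4-6)] lin3[OF X(1-3)] lin3[OF X(4-6)] lin2[OF Z(3,6)] lin2[OF X(3,6)]
    by simp
qed

lemma bdry_cong: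
  assumes "\<forall>z\<in>{zs j..zs (Suc j)}. a z = a' z" "\<forall>z\<in>{zs j..zs (Suc j)}. b z = b' z"
    "\<forall>x\<in>{xs i..xs (Suc i)}. c x = c' x" "\<forall>x\<in>{xs i..xs (Suc i)}. d x = d' x"
  shows "bdry xs zs i j a b c d = bdry xs zs i j a' b' c' d'"
proof -
  have "integral {zs j..zs (Suc j)} a = integral {zs j..zs (Suc j)} a'"
    "integral {zs j..zs (Suc j)} b = integral {zs j..zs (Suc j)} b'"
    "integral {xs i..xs (Suc i)} c = integral {xs i..xs (Suc i)} c'"
    "integral {xs i..xs (Suc i)} d = integral {xs i..xs (Suc i)} d'"
    using assms by (auto intro!: integral_cong)
  then show ?thesis unfolding bdry_def by simp
qed

lemma sum_sym:
  fixes a :: "nat \<Rightarrow> nat \<Rightarrow> real"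
  assumes "\<forall>m<M. \<forall>l<M. a m l = a l m"
  shows "(\<Sum>m<M. \<Sum>l<M. a m l * b l * c m) = (\<Sum>m<M. \<Sum>l<M. a m l * b m * c l)"
proof -
  have "(\<Sum>m<M. \<Sum>l<M. a m l * b l * c m) = (\<Sum>l<M. \<Sum>m<M. a m l * b l * c m)"
    by (rule sum.swap)
  also have "\<dots> = (\<Sum>l<M. \<Sum>m<M. a l m * b l * c m)"
    using assms by (intro sum.cong) auto
  finally show ?thesis .
qed

lemma sum2: "(\<Sum>d<2. f d) = f 0 + f (Suc 0)"
  by (simp add: numeral_2_eq_2)

lemma pd0: "pd 0 = pdx" and pd1: "pd (Suc 0) = pdz"
  by (auto simp: pd_def)

context sch begin

definition Phi :: "nat \<Rightarrow> nat \<Rightarrow> nat \<Rightarrow> real \<times> real \<Rightarrow> real" where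
  "Phi i j d y = (\<Sum>m<M. \<Sum>l<M. A i j m l y * v' t i j l y * S t i j m d y)"

lemma Asym_at: "i < Nx \<Longrightarrow> j < Nz \<Longrightarrow> y \<in> cell xs zs i j \<Longrightarrow> \<forall>m<M. \<forall>l<M. A i j m l y = A i j l m y"
  using A_sym by blast

lemma div_cell:
  assumes ij: "i < Nx" "j < Nz"
  shows "integral (cell xs zs i j) (\<lambda>y. \<Sum>m<M. \<Sum>d<2. AS M A (S t) i j m d y * pd d (v' t i j m) y)
    + integral (cell xs zs i j) (\<lambda>y. \<Sum>m<M. (\<Sum>l<M. A i j m l y * v' t i j l y)
            * (pdx (S t i j m 0) y + pdz (S t i j m 1) y))
    + integral (cell xs zs i j) (\<lambda>y. \<Sum>m<M. \<Sum>d<2.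
            (\<Sum>l<M. v' t i j l y * pd d (A i j m l) y) * S t i j m d y)
    = integral {zs j..zs (Suc j)} (\<lambda>z. Phi i j 0 (xs (Suc i), z) - Phi i j 0 (xs i, z))
    + integral {xs i..xs (Suc i)} (\<lambda>x. Phi i j 1 (x, zs (Suc j)) - Phi i j 1 (x, zs j))"
proof -
  define f1 where "f1 = (\<lambda>y. \<Sum>m<M. \<Sum>d<2. AS M A (S t) i j m d y * pd d (v' t i j m) y)"
  define f2 where "f2 = (\<lambda>y. \<Sum>m<M. (\<Sum>l<M. A i j m l y * v' t i j l y)
            * (pdx (S t i j m 0) y + pdz (S t i j m 1) y))"
  define f3 where "f3 = (\<lambda>y. \<Sum>m<M. \<Sum>d<2.
            (\<Sum>l<M. v' t i j l y * pd d (A i j m l) y) * S t i j m d y)"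
  define Dx where "Dx = (\<lambda>y. \<Sum>m<M. \<Sum>l<M. pdx (A i j m l) y * v' t i j l y * S t i j m 0 y
      + A i j m l y * pdx (v' t i j l) y * S t i j m 0 y + A i j m l y * v' t i j l y * pdx (S t i j m 0) y)"
  define Dz where "Dz = (\<lambda>y. \<Sum>m<M. \<Sum>l<M. pdz (A i j m l) y * v' t i j l y * S t i j m 1 y
      + A i j m l y * pdz (v' t i j l) y * S t i j m 1 y + A i j m l y * v' t i j l y * pdz (S t i j m 1) y)"
  let ?K = "cell xs zs i j"
  have cK: "continuous_on ?K (\<lambda>y. y)" by (rule continuous_on_id)
  note cs = contA[OF ij _ _ cK img_cell_id] contV'[OF ij _ cK] contV'x[OF ij _ cK] contV'z[OF ij _ cK]
     contSt[OF ij _ _ cK] contStx[OF ij _ _ cK] contStz[OF ij _ _ cK]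
  have c1: "continuous_on ?K f1" unfolding f1_def sum2 pd0 pd1 AS_def
    using cs by (auto intro!: continuous_intros)
  have c2: "continuous_on ?K f2" unfolding f2_def
    using cs by (auto intro!: continuous_intros)
  have c3: "continuous_on ?K f3" unfolding f3_def sum2 pd0 pd1
    using cs by (auto intro!: continuous_intros)
  have cDx: "continuous_on ?K Dx" unfolding Dx_def
    using cs by (auto intro!: continuous_intros)
  have cDz: "continuous_on ?K Dz" unfolding Dz_def
    using cs by (auto intro!: continuous_intros)
  have int: "\<And>f :: real \<times> real \<Rightarrow> real. continuous_on ?K f \<Longrightarrow> f integrable_on ?K"
    unfolding cell_cbox by (rule integrable_continuous)
  have pw: "f1 y + f2 y + f3 y = Dx y + Dz y" if y: "y \<in> ?K" for y
  proof -
    have sy: "\<forall>m<M. \<forall>l<M. A i j m l y = A i j l m y" using Asym_at[OF ij y] .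
    have e1: "f1 y = (\<Sum>m<M. \<Sum>l<M. A i j m l y * pdx (v' t i j l) y * S t i j m 0 y)
                  + (\<Sum>m<M. \<Sum>l<M. A i j m l y * pdz (v' t i j l) y * S t i j m 1 y)"
    proof -
      have "f1 y = (\<Sum>m<M. \<Sum>l<M. A i j m l y * S t i j l 0 y * pdx (v' t i j m) y)
                 + (\<Sum>m<M. \<Sum>l<M. A i j m l y * S t i j l 1 y * pdz (v' t i j m) y)"
        unfolding f1_def sum2 pd0 pd1 AS_def
        by (simp add: sum.distrib sum_distrib_right)
      also have "\<dots> = (\<Sum>m<M. \<Sum>l<M. A i j m l y * pdx (v' t i j l) y * S t i j m 0 y)
                  + (\<Sum>m<M. \<Sum>l<M. A i j m l y * pdz (v' t i j l) y * S t i j m 1 y)"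
        using sum_sym[OF sy, of "\<lambda>l. S t i j l 0 y" "\<lambda>m. pdx (v' t i j m) y"]
              sum_sym[OF sy, of "\<lambda>l. S t i j l 1 y" "\<lambda>m. pdz (v' t i j m) y"]
        by (simp add: mult_ac)
      finally show ?thesis .
    qed
    have e2: "f2 y = (\<Sum>m<M. \<Sum>l<M. A i j m l y * v' t i j l y * pdx (S t i j m 0) y)
                  + (\<Sum>m<M. \<Sum>l<M. A i j m l y * v' t i j l y * pdz (S t i j m 1) y)"
      unfolding f2_def by (simp add: distrib_left sum.distrib sum_distrib_right sum_distrib_left mult_ac)
    have e3: "f3 y = (\<Sum>m<M. \<Sum>l<M. pdx (A i j m l) y * v' t i j l y * S t i j m 0 y)
                  + (\<Sum>m<M. \<Sum>l<M. pdz (A i j m l) y * v' t i j l y * S t i j m 1 y)"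
      unfolding f3_def sum2 pd0 pd1 by (simp add: sum.distrib sum_distrib_right sum_distrib_left mult_ac)
    show ?thesis unfolding e1 e2 e3 Dx_def Dz_def by (simp add: sum.distrib)
  qed
  have "integral ?K f1 + integral ?K f2 + integral ?K f3 = integral ?K (\<lambda>y. f1 y + f2 y + f3 y)"
    using int[OF c1] int[OF c2] int[OF c3] by (simp add: integral_add integrable_add)
  also have "\<dots> = integral ?K (\<lambda>y. Dx y + Dz y)"
    using pw by (intro integral_cong) auto
  also have "\<dots> = integral ?K Dx + integral ?K Dz"
    using int[OF cDx] int[OF cDz] by (simp add: integral_add)
  also have "integral ?K Dx = integral {zs j..zs (Suc j)} (\<lambda>z. Phi i j 0 (xs (Suc i), z) - Phi i j 0 (xs i, z))"
    unfolding cell_cbox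
  proof (rule div_x)
    show "xs i \<le> xs (Suc i)" "zs j \<le> zs (Suc j)" using xle zle ij by auto
    show "continuous_on (cbox (xs i, zs j) (xs (Suc i), zs (Suc j))) Dx" using cDx unfolding cell_cbox .
    show "\<forall>x\<in>{xs i..xs (Suc i)}. \<forall>z\<in>{zs j..zs (Suc j)}. ((\<lambda>s. Phi i j 0 (s, z)) has_real_derivative Dx (x, z)) (at x)"
    proof (intro ballI)
      fix x z assume "x \<in> {xs i..xs (Suc i)}" "z \<in> {zs j..zs (Suc j)}"
      then have xz: "(x, z) \<in> ?K" by (auto simp: cell_def)
      show "((\<lambda>s. Phi i j 0 (s, z)) has_real_derivative Dx (x, z)) (at x)"
        unfolding Phi_def Dx_def
        using ij xz
        by (auto intro!: derivative_eq_intros A_facts(4) poly2_dx(1)[OF pv'[OF tpos]] poly2_dx(1)[OF pS[OF tpos]]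
            simp: algebra_simps)
    qed
  qed
  also have "integral ?K Dz = integral {xs i..xs (Suc i)} (\<lambda>x. Phi i j 1 (x, zs (Suc j)) - Phi i j 1 (x, zs j))"
    unfolding cell_cbox
  proof (rule div_z)
    show "xs i \<le> xs (Suc i)" "zs j \<le> zs (Suc j)" using xle zle ij by auto
    show "continuous_on (cbox (xs i, zs j) (xs (Suc i), zs (Suc j))) Dz" using cDz unfolding cell_cbox .
    show "\<forall>x\<in>{xs i..xs (Suc i)}. \<forall>z\<in>{zs j..zs (Suc j)}. ((\<lambda>s. Phi i j 1 (x, s)) has_real_derivative Dz (x, z)) (at z)"
    proof (intro ballI)
      fix x z assume "x \<in> {xs i..xs (Suc i)}" "z \<in> {zs j..zs (Suc j)}"
      then have xz: "(x, z) \<in> ?K" by (auto simp: cell_def)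
      show "((\<lambda>s. Phi i j 1 (x, s)) has_real_derivative Dz (x, z)) (at z)"
        unfolding Phi_def Dz_def
        using ij xz
        by (auto intro!: derivative_eq_intros A_facts(5) poly2_dz(1)[OF pv'[OF tpos]] poly2_dz(1)[OF pS[OF tpos]]
            simp: algebra_simps)
    qed
  qed
  finally show ?thesis unfolding f1_def f2_def f3_def .
qed

end

context sch begin

definition rhof :: "nat \<Rightarrow> nat \<Rightarrow> real \<Rightarrow> real" where
  "rhof i j z = (\<Sum>m<M. (\<Sum>l<M. A i j m l (xs (Suc i), z) *
     (if Suc i < Nx then v' t (Suc i) j l (xs (Suc i), z) else 0)) * S t i j m 0 (xs (Suc i), z))"

definition tauf :: "nat \<Rightarrow> nat \<Rightarrow> real \<Rightarrow> real" where
  "tauf i j x = (\<Sum>m<M. (\<Sum>l<M. A i j m l (x, zs (Suc j)) *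
     (if Suc j < Nz then v' t i (Suc j) l (x, zs (Suc j)) else 0)) * S t i j m 1 (x, zs (Suc j)))"

lemma cont_if_const:
  "(P \<Longrightarrow> continuous_on K f) \<Longrightarrow> (\<not> P \<Longrightarrow> continuous_on K g) \<Longrightarrow> continuous_on K (\<lambda>x. if P then f x else g x)"
  by (cases P) auto

lemma img_L2:
  assumes "i < Nx"
  shows "(\<lambda>z. (xs i, z)) ` {zs j..zs (Suc j)} \<subseteq> cell xs zs (if 0 < i then i - 1 else i) j"
proof (cases "0 < i")
  case True
  have "xs (i - 1) \<le> xs (Suc (i - 1))" using xle[of "i - 1"] assms by simp
  then have "xs (i - 1) \<le> xs i" using True by (simp add: Suc_pred)
  then show ?thesis using True by (auto simp: cell_def Suc_pred)
next
  case False
  then show ?thesis using xle[OF assms] by (auto simp: cell_def)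
qed

lemma img_B2:
  assumes "j < Nz"
  shows "(\<lambda>x. (x, zs j)) ` {xs i..xs (Suc i)} \<subseteq> cell xs zs i (if 0 < j then j - 1 else j)"
proof (cases "0 < j")
  case True
  have "zs (j - 1) \<le> zs (Suc (j - 1))" using zle[of "j - 1"] assms by simp
  then have "zs (j - 1) \<le> zs j" using True by (simp add: Suc_pred)
  then show ?thesis using True by (auto simp: cell_def Suc_pred)
next
  case False
  then show ?thesis using zle[OF assms] by (auto simp: cell_def)
qed

lemma cell_id:
  assumes ij: "i < Nx" "j < Nz"
  shows "integral (cell xs zs i j) (\<lambda>y. \<Sum>m<M. v'' t i j m y * v' t i j m y)
       + integral (cell xs zs i j) (\<lambda>y. \<Sum>m<M. \<Sum>d<2. Sd i j m d y * S t i j m d y)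
     = integral {zs j..zs (Suc j)} (rhof i j) - (if 0 < i then integral {zs j..zs (Suc j)} (rhof (i - 1) j) else 0)
     + integral {xs i..xs (Suc i)} (tauf i j) - (if 0 < j then integral {xs i..xs (Suc i)} (tauf i (j - 1)) else 0)"
proof -
  let ?Z = "{zs j..zs (Suc j)}" and ?X = "{xs i..xs (Suc i)}"
  define iL where "iL = (if 0 < i then i - 1 else i)"
  define jB where "jB = (if 0 < j then j - 1 else j)"
  have iL: "iL < Nx" "(\<lambda>z. (xs i, z)) ` ?Z \<subseteq> cell xs zs iL j"
    using img_L2[OF ij(1), of j] ij unfolding iL_def by auto
  have jB: "jB < Nz" "(\<lambda>x. (x, zs j)) ` ?X \<subseteq> cell xs zs i jB"
    using img_B2[OF ij(2), of i] ij unfolding jB_def by auto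
  define gR1 where "gR1 = (\<lambda>m z. AS M A (S t) i j m 0 (xs (Suc i), z) * v' t i j m (xs (Suc i), z))"
  define gL1 where "gL1 = (\<lambda>m z. AS M A (S t) iL j m 0 (xs i, z) * v' t i j m (xs i, z))"
  define gT1 where "gT1 = (\<lambda>m x. AS M A (S t) i j m 1 (x, zs (Suc j)) * v' t i j m (x, zs (Suc j)))"
  define gB1 where "gB1 = (\<lambda>m x. AS M A (S t) i jB m 1 (x, zs j) * v' t i j m (x, zs j))"
  define vR where "vR = (\<lambda>l y. if Suc i < Nx then v' t (Suc i) j l y else 0)"
  define vL where "vL = (\<lambda>l y. if 0 < i then v' t i j l y else 0)"
  define vT where "vT = (\<lambda>l y. if Suc j < Nz then v' t i (Suc j) l y else 0)"
  define vB where "vB = (\<lambda>l y. if 0 < j then v' t i j l y else 0)"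
  define gR2 where "gR2 = (\<lambda>m z. (\<Sum>l<M. A i j m l (xs (Suc i), z) * vR l (xs (Suc i), z)) * S t i j m 0 (xs (Suc i), z))"
  define gL2 where "gL2 = (\<lambda>m z. (\<Sum>l<M. A i j m l (xs i, z) * vL l (xs i, z)) * S t i j m 0 (xs i, z))"
  define gT2 where "gT2 = (\<lambda>m x. (\<Sum>l<M. A i j m l (x, zs (Suc j)) * vT l (x, zs (Suc j))) * S t i j m 1 (x, zs (Suc j)))"
  define gB2 where "gB2 = (\<lambda>m x. (\<Sum>l<M. A i j m l (x, zs j) * vB l (x, zs j)) * S t i j m 1 (x, zs j))"
  define I1 where "I1 = integral (cell xs zs i j) (\<lambda>y. \<Sum>m<M. v'' t i j m y * v' t i j m y)"
  define IAS where "IAS = integral (cell xs zs i j) (\<lambda>y. \<Sum>m<M. \<Sum>d<2. AS M A (S t) i j m d y * pd d (v' t i j m) y)"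
  define F2 where "F2 = integral (cell xs zs i j) (\<lambda>y. \<Sum>m<M. (\<Sum>l<M. A i j m l y * v' t i j l y)
            * (pdx (S t i j m 0) y + pdz (S t i j m 1) y))"
  define F3 where "F3 = integral (cell xs zs i j) (\<lambda>y. \<Sum>m<M. \<Sum>d<2.
            (\<Sum>l<M. v' t i j l y * pd d (A i j m l) y) * S t i j m d y)"
  have Vv': "Vh Nx Nz M k (v' t)" using v_Vh tpos by blast
  have E1: "I1 + IAS - (\<Sum>m<M. bdry xs zs i j (gR1 m) (gL1 m) (gT1 m) (gB1 m)) = 0"
    using scheme1 tpos ij Vv' unfolding eq1_def Let_def I1_def IAS_def gR1_def gL1_def gT1_def gB1_def iL_def jB_def
    by simp
  have R2: "rest2 Nx Nz M xs zs A (v' t) i j (S t) = F2 + F3 - (\<Sum>m<M. bdry xs zs i j (gR2 m) (gL2 m) (gT2 m) (gB2 m))"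
    unfolding rest2_def Let_def F2_def F3_def gR2_def gL2_def gT2_def gB2_def vR_def vL_def vT_def vB_def
    by simp
  have DV: "IAS + F2 + F3 = integral ?Z (\<lambda>z. Phi i j 0 (xs (Suc i), z) - Phi i j 0 (xs i, z))
    + integral ?X (\<lambda>x. Phi i j 1 (x, zs (Suc j)) - Phi i j 1 (x, zs j))"
    unfolding IAS_def F2_def F3_def by (rule div_cell[OF ij])
  have I2: "integral (cell xs zs i j) (\<lambda>y. \<Sum>m<M. \<Sum>d<2. Sd i j m d y * S t i j m d y)
       = - rest2 Nx Nz M xs zs A (v' t) i j (S t)" by (rule T2[OF ij])
  have cpR: "continuous_on ?Z (\<lambda>z. (xs (Suc i), z))" "continuous_on ?Z (\<lambda>z. (xs i, z))"
    "continuous_on ?X (\<lambda>x. (x, zs (Suc j)))" "continuous_on ?X (\<lambda>x. (x, zs j))"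
    by (auto intro!: continuous_intros)
  have cR1: "\<forall>m<M. continuous_on ?Z (gR1 m)" unfolding gR1_def AS_def
    using ij cpR by (auto intro!: continuous_intros contA contSt contV' img_R)
  have cL1: "\<forall>m<M. continuous_on ?Z (gL1 m)" unfolding gL1_def AS_def
    using ij cpR iL by (auto intro!: continuous_intros contA contSt contV')
  have cT1: "\<forall>m<M. continuous_on ?X (gT1 m)" unfolding gT1_def AS_def
    using ij cpR by (auto intro!: continuous_intros contA contSt contV' img_T)
  have cB1: "\<forall>m<M. continuous_on ?X (gB1 m)" unfolding gB1_def AS_def
    using ij cpR jB by (auto intro!: continuous_intros contA contSt contV')
  have cR2: "\<forall>m<M. continuous_on ?Z (gR2 m)" unfolding gR2_def vR_def
    using ij cpR by (auto intro!: continuous_intros contA contSt contV' img_R cont_if_const)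
  have cL2: "\<forall>m<M. continuous_on ?Z (gL2 m)" unfolding gL2_def vL_def
    using ij cpR by (auto intro!: continuous_intros contA contSt contV' img_L cont_if_const)
  have cT2: "\<forall>m<M. continuous_on ?X (gT2 m)" unfolding gT2_def vT_def
    using ij cpR by (auto intro!: continuous_intros contA contSt contV' img_T cont_if_const)
  have cB2: "\<forall>m<M. continuous_on ?X (gB2 m)" unfolding gB2_def vB_def
    using ij cpR by (auto intro!: continuous_intros contA contSt contV' img_B cont_if_const)
  have cPhi: "continuous_on ?Z (\<lambda>z. Phi i j 0 (xs (Suc i), z))" "continuous_on ?Z (\<lambda>z. Phi i j 0 (xs i, z))"
     "continuous_on ?X (\<lambda>x. Phi i j 1 (x, zs (Suc j)))" "continuous_on ?X (\<lambda>x. Phi i j 1 (x, zs j))"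
    unfolding Phi_def using ij cpR by (auto intro!: continuous_intros contA contSt contV' img_R img_L img_T img_B)
  have B1: "(\<Sum>m<M. bdry xs zs i j (gR1 m) (gL1 m) (gT1 m) (gB1 m)) =
     bdry xs zs i j (\<lambda>z. \<Sum>m<M. gR1 m z) (\<lambda>z. \<Sum>m<M. gL1 m z) (\<lambda>x. \<Sum>m<M. gT1 m x) (\<lambda>x. \<Sum>m<M. gB1 m x)"
    by (rule bdry_sum) (use cR1 cL1 cT1 cB1 in auto)
  have B2: "(\<Sum>m<M. bdry xs zs i j (gR2 m) (gL2 m) (gT2 m) (gB2 m)) =
     bdry xs zs i j (\<lambda>z. \<Sum>m<M. gR2 m z) (\<lambda>z. \<Sum>m<M. gL2 m z) (\<lambda>x. \<Sum>m<M. gT2 m x) (\<lambda>x. \<Sum>m<M. gB2 m x)"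
    by (rule bdry_sum) (use cR2 cL2 cT2 cB2 in auto)
  have BC: "bdry xs zs i j (\<lambda>z. \<Sum>m<M. gR1 m z) (\<lambda>z. \<Sum>m<M. gL1 m z) (\<lambda>x. \<Sum>m<M. gT1 m x) (\<lambda>x. \<Sum>m<M. gB1 m x)
     + bdry xs zs i j (\<lambda>z. \<Sum>m<M. gR2 m z) (\<lambda>z. \<Sum>m<M. gL2 m z) (\<lambda>x. \<Sum>m<M. gT2 m x) (\<lambda>x. \<Sum>m<M. gB2 m x)
     - (integral ?Z (\<lambda>z. Phi i j 0 (xs (Suc i), z) - Phi i j 0 (xs i, z))
       + integral ?X (\<lambda>x. Phi i j 1 (x, zs (Suc j)) - Phi i j 1 (x, zs j)))
     = bdry xs zs i j (\<lambda>z. (\<Sum>m<M. gR1 m z) + (\<Sum>m<M. gR2 m z) - Phi i j 0 (xs (Suc i), z))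
         (\<lambda>z. (\<Sum>m<M. gL1 m z) + (\<Sum>m<M. gL2 m z) - Phi i j 0 (xs i, z))
         (\<lambda>x. (\<Sum>m<M. gT1 m x) + (\<Sum>m<M. gT2 m x) - Phi i j 1 (x, zs (Suc j)))
         (\<lambda>x. (\<Sum>m<M. gB1 m x) + (\<Sum>m<M. gB2 m x) - Phi i j 1 (x, zs j))"
    by (rule bdry_comb) (use cR1 cL1 cT1 cB1 cR2 cL2 cT2 cB2 cPhi in \<open>auto intro!: continuous_on_sum\<close>)
  have pR: "\<forall>z\<in>?Z. (\<Sum>m<M. gR1 m z) + (\<Sum>m<M. gR2 m z) - Phi i j 0 (xs (Suc i), z) = rhof i j z"
  proof
    fix z assume z: "z \<in> ?Z"
    let ?y = "(xs (Suc i), z)"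
    have y: "?y \<in> cell xs zs i j" using img_R[OF ij(1)] z by blast
    have sy: "\<forall>m<M. \<forall>l<M. A i j m l ?y = A i j l m ?y" using Asym_at[OF ij y] .
    have "(\<Sum>m<M. gR1 m z) = Phi i j 0 ?y"
      unfolding gR1_def AS_def Phi_def
      using sum_sym[OF sy, of "\<lambda>l. S t i j l 0 ?y" "\<lambda>m. v' t i j m ?y"]
      by (simp add: sum_distrib_right sum_distrib_left mult_ac)
    moreover have "(\<Sum>m<M. gR2 m z) = rhof i j z"
      unfolding gR2_def rhof_def vR_def ..
    ultimately show "(\<Sum>m<M. gR1 m z) + (\<Sum>m<M. gR2 m z) - Phi i j 0 ?y = rhof i j z" by simp
  qed
  have pT: "\<forall>x\<in>?X. (\<Sum>m<M. gT1 m x) + (\<Sum>m<M. gT2 m x) - Phi i j 1 (x, zs (Suc j)) = tauf i j x"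
  proof
    fix x assume x: "x \<in> ?X"
    let ?y = "(x, zs (Suc j))"
    have y: "?y \<in> cell xs zs i j" using img_T[OF ij(2)] x by blast
    have sy: "\<forall>m<M. \<forall>l<M. A i j m l ?y = A i j l m ?y" using Asym_at[OF ij y] .
    have "(\<Sum>m<M. gT1 m x) = Phi i j 1 ?y"
      unfolding gT1_def AS_def Phi_def
      using sum_sym[OF sy, of "\<lambda>l. S t i j l 1 ?y" "\<lambda>m. v' t i j m ?y"]
      by (simp add: sum_distrib_right sum_distrib_left mult_ac)
    moreover have "(\<Sum>m<M. gT2 m x) = tauf i j x"
      unfolding gT2_def tauf_def vT_def ..
    ultimately show "(\<Sum>m<M. gT1 m x) + (\<Sum>m<M. gT2 m x) - Phi i j 1 ?y = tauf i j x" by simp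
  qed
  have pL: "\<forall>z\<in>?Z. (\<Sum>m<M. gL1 m z) + (\<Sum>m<M. gL2 m z) - Phi i j 0 (xs i, z)
      = (if 0 < i then rhof (i - 1) j z else 0)"
  proof
    fix z assume z: "z \<in> ?Z"
    let ?y = "(xs i, z)"
    have yL: "?y \<in> cell xs zs iL j" using iL(2) z by blast
    have syL: "\<forall>m<M. \<forall>l<M. A iL j m l ?y = A iL j l m ?y" using Asym_at[OF iL(1) ij(2) yL] .
    show "(\<Sum>m<M. gL1 m z) + (\<Sum>m<M. gL2 m z) - Phi i j 0 ?y = (if 0 < i then rhof (i - 1) j z else 0)"
    proof (cases "0 < i")
      case True
      then have iL': "iL = i - 1" "Suc (i - 1) = i" unfolding iL_def by auto
      have "(\<Sum>m<M. gL2 m z) = Phi i j 0 ?y"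
        unfolding gL2_def vL_def Phi_def using True by (simp add: sum_distrib_right sum_distrib_left mult_ac)
      moreover have "(\<Sum>m<M. gL1 m z) = rhof (i - 1) j z"
        unfolding gL1_def AS_def rhof_def iL' using ij
        using sum_sym[OF syL[unfolded iL'(1)], of "\<lambda>l. S t (i - 1) j l 0 ?y" "\<lambda>m. v' t i j m ?y"]
        by (simp add: sum_distrib_right sum_distrib_left mult_ac)
      ultimately show ?thesis using True by simp
    next
      case False
      then have iL': "iL = i" unfolding iL_def by auto
      have "(\<Sum>m<M. gL2 m z) = 0"
        unfolding gL2_def vL_def using False by simp
      moreover have "(\<Sum>m<M. gL1 m z) = Phi i j 0 ?y"
        unfolding gL1_def AS_def Phi_def iL'
        using sum_sym[OF syL[unfolded iL'], of "\<lambda>l. S t i j l 0 ?y" "\<lambda>m. v' t i j m ?y"]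
        by (simp add: sum_distrib_right sum_distrib_left mult_ac)
      ultimately show ?thesis using False by simp
    qed
  qed
  have pB: "\<forall>x\<in>?X. (\<Sum>m<M. gB1 m x) + (\<Sum>m<M. gB2 m x) - Phi i j 1 (x, zs j)
      = (if 0 < j then tauf i (j - 1) x else 0)"
  proof
    fix x assume x: "x \<in> ?X"
    let ?y = "(x, zs j)"
    have yB: "?y \<in> cell xs zs i jB" using jB(2) x by blast
    have syB: "\<forall>m<M. \<forall>l<M. A i jB m l ?y = A i jB l m ?y" using Asym_at[OF ij(1) jB(1) yB] .
    show "(\<Sum>m<M. gB1 m x) + (\<Sum>m<M. gB2 m x) - Phi i j 1 ?y = (if 0 < j then tauf i (j - 1) x else 0)"
    proof (cases "0 < j")
      case True
      then have jB': "jB = j - 1" "Suc (j - 1) = j" unfolding jB_def by auto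
      have "(\<Sum>m<M. gB2 m x) = Phi i j 1 ?y"
        unfolding gB2_def vB_def Phi_def using True by (simp add: sum_distrib_right sum_distrib_left mult_ac)
      moreover have "(\<Sum>m<M. gB1 m x) = tauf i (j - 1) x"
        unfolding gB1_def AS_def tauf_def jB' using ij
        using sum_sym[OF syB[unfolded jB'(1)], of "\<lambda>l. S t i (j - 1) l 1 ?y" "\<lambda>m. v' t i j m ?y"]
        by (simp add: sum_distrib_right sum_distrib_left mult_ac)
      ultimately show ?thesis using True by simp
    next
      case False
      then have jB': "jB = j" unfolding jB_def by auto
      have "(\<Sum>m<M. gB2 m x) = 0"
        unfolding gB2_def vB_def using False by simp
      moreover have "(\<Sum>m<M. gB1 m x) = Phi i j 1 ?y"
        unfolding gB1_def AS_def Phi_def jB'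
        using sum_sym[OF syB[unfolded jB'], of "\<lambda>l. S t i j l 1 ?y" "\<lambda>m. v' t i j m ?y"]
        by (simp add: sum_distrib_right sum_distrib_left mult_ac)
      ultimately show ?thesis using False by simp
    qed
  qed
  have BF: "bdry xs zs i j (\<lambda>z. (\<Sum>m<M. gR1 m z) + (\<Sum>m<M. gR2 m z) - Phi i j 0 (xs (Suc i), z))
         (\<lambda>z. (\<Sum>m<M. gL1 m z) + (\<Sum>m<M. gL2 m z) - Phi i j 0 (xs i, z))
         (\<lambda>x. (\<Sum>m<M. gT1 m x) + (\<Sum>m<M. gT2 m x) - Phi i j 1 (x, zs (Suc j)))
         (\<lambda>x. (\<Sum>m<M. gB1 m x) + (\<Sum>m<M. gB2 m x) - Phi i j 1 (x, zs j))
     = bdry xs zs i j (rhof i j) (\<lambda>z. if 0 < i then rhof (i - 1) j z else 0)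
         (tauf i j) (\<lambda>x. if 0 < j then tauf i (j - 1) x else 0)"
    by (rule bdry_cong) (use pR pL pT pB in auto)
  have ifi: "integral ?Z (\<lambda>z. if 0 < i then rhof (i - 1) j z else 0) = (if 0 < i then integral ?Z (rhof (i - 1) j) else 0)"
    by (cases "0 < i") auto
  have ifj: "integral ?X (\<lambda>x. if 0 < j then tauf i (j - 1) x else 0) = (if 0 < j then integral ?X (tauf i (j - 1)) else 0)"
    by (cases "0 < j") auto
  have "I1 + integral (cell xs zs i j) (\<lambda>y. \<Sum>m<M. \<Sum>d<2. Sd i j m d y * S t i j m d y)
      = bdry xs zs i j (rhof i j) (\<lambda>z. if 0 < i then rhof (i - 1) j z else 0)
         (tauf i j) (\<lambda>x. if 0 < j then tauf i (j - 1) x else 0)"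
    unfolding I2 R2 BF[symmetric] BC[symmetric] DV[symmetric] B1[symmetric] B2[symmetric]
    using E1 by simp
  then show ?thesis unfolding I1_def bdry_def ifi ifj .
qed

lemma telescope:
  fixes f :: "nat \<Rightarrow> real"
  shows "(\<Sum>i<n. f i - (if 0 < i then f (i - 1) else 0)) = (if n = 0 then 0 else f (n - 1))"
  by (induction n) (auto simp: not_less_eq)

lemma rho_last: "j < Nz \<Longrightarrow> integral {zs j..zs (Suc j)} (rhof (Nx - 1) j) = 0"
  using mesh unfolding rhof_def by simp

lemma tau_last: "i < Nx \<Longrightarrow> integral {xs i..xs (Suc i)} (tauf i (Nz - 1)) = 0"
  using mesh unfolding tauf_def by simp

lemma total_zero:
  "(\<Sum>i<Nx. \<Sum>j<Nz. integral (cell xs zs i j) (\<lambda>y.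
        (\<Sum>m<M. v'' t i j m y * v' t i j m y + v' t i j m y * v'' t i j m y)
      + (\<Sum>m<M. \<Sum>d<2. Sd i j m d y * S t i j m d y + S t i j m d y * Sd i j m d y))) = 0"
proof -
  have e: "integral (cell xs zs i j) (\<lambda>y.
        (\<Sum>m<M. v'' t i j m y * v' t i j m y + v' t i j m y * v'' t i j m y)
      + (\<Sum>m<M. \<Sum>d<2. Sd i j m d y * S t i j m d y + S t i j m d y * Sd i j m d y))
    = 2 * (integral {zs j..zs (Suc j)} (rhof i j) - (if 0 < i then integral {zs j..zs (Suc j)} (rhof (i - 1) j) else 0))
    + 2 * (integral {xs i..xs (Suc i)} (tauf i j) - (if 0 < j then integral {xs i..xs (Suc i)} (tauf i (j - 1)) else 0))"
    if ij: "i < Nx" "j < Nz" for i j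
  proof -
    let ?K = "cell xs zs i j"
    have cK: "continuous_on ?K (\<lambda>y. y)" by (rule continuous_on_id)
    have c1: "continuous_on ?K (\<lambda>y. \<Sum>m<M. v'' t i j m y * v' t i j m y)"
      using ij by (auto intro!: continuous_intros contV' contV'' cK)
    have c2: "continuous_on ?K (\<lambda>y. \<Sum>m<M. \<Sum>d<2. Sd i j m d y * S t i j m d y)"
      using ij by (auto intro!: continuous_intros Sd_cont contSt cK)
    have int: "\<And>f :: real \<times> real \<Rightarrow> real. continuous_on ?K f \<Longrightarrow> f integrable_on ?K"
      unfolding cell_cbox by (rule integrable_continuous)
    have "integral ?K (\<lambda>y.
        (\<Sum>m<M. v'' t i j m y * v' t i j m y + v' t i j m y * v'' t i j m y)
      + (\<Sum>m<M. \<Sum>d<2. Sd i j m d y * S t i j m d y + S t i j m d y * Sd i j m d y))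
      = integral ?K (\<lambda>y. 2 * ((\<Sum>m<M. v'' t i j m y * v' t i j m y) + (\<Sum>m<M. \<Sum>d<2. Sd i j m d y * S t i j m d y)))"
      by (intro integral_cong) (simp add: sum.distrib mult.commute distrib_left sum_distrib_left)
    also have "\<dots> = 2 * (integral ?K (\<lambda>y. \<Sum>m<M. v'' t i j m y * v' t i j m y)
        + integral ?K (\<lambda>y. \<Sum>m<M. \<Sum>d<2. Sd i j m d y * S t i j m d y))"
      using int[OF c1] int[OF c2] by (simp add: integral_add integrable_add)
    also have "\<dots> = 2 * (integral {zs j..zs (Suc j)} (rhof i j) - (if 0 < i then integral {zs j..zs (Suc j)} (rhof (i - 1) j) else 0)
     + integral {xs i..xs (Suc i)} (tauf i j) - (if 0 < j then integral {xs i..xs (Suc i)} (tauf i (j - 1)) else 0))"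
      unfolding cell_id[OF ij] ..
    finally show ?thesis by simp
  qed
  have "(\<Sum>i<Nx. \<Sum>j<Nz. integral (cell xs zs i j) (\<lambda>y.
        (\<Sum>m<M. v'' t i j m y * v' t i j m y + v' t i j m y * v'' t i j m y)
      + (\<Sum>m<M. \<Sum>d<2. Sd i j m d y * S t i j m d y + S t i j m d y * Sd i j m d y)))
    = 2 * (\<Sum>j<Nz. \<Sum>i<Nx. integral {zs j..zs (Suc j)} (rhof i j) - (if 0 < i then integral {zs j..zs (Suc j)} (rhof (i - 1) j) else 0))
    + 2 * (\<Sum>i<Nx. \<Sum>j<Nz. integral {xs i..xs (Suc i)} (tauf i j) - (if 0 < j then integral {xs i..xs (Suc i)} (tauf i (j - 1)) else 0))"
    using e by (simp add: sum.distrib sum_distrib_left sum.swap[of _ "{..<Nx}" "{..<Nz}"])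
  also have "\<dots> = 0"
  proof -
    have "(\<Sum>i<Nx. integral {zs j..zs (Suc j)} (rhof i j) - (if 0 < i then integral {zs j..zs (Suc j)} (rhof (i - 1) j) else 0)) = 0"
      if "j < Nz" for j
      using telescope[of "\<lambda>i. integral {zs j..zs (Suc j)} (rhof i j)" Nx] rho_last[OF that] mesh by simp
    moreover have "(\<Sum>j<Nz. integral {xs i..xs (Suc i)} (tauf i j) - (if 0 < j then integral {xs i..xs (Suc i)} (tauf i (j - 1)) else 0)) = 0"
      if "i < Nx" for i
      using telescope[of "\<lambda>j. integral {xs i..xs (Suc i)} (tauf i j)" Nz] tau_last[OF that] mesh by simp
    ultimately show ?thesis by simp
  qed
  finally show ?thesis .
qed

end

theorem theorem2:
  fixes Nx Nz M k :: nat
    and xs zs :: "nat \<Rightarrow> real"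
    and A :: "nat \<Rightarrow> nat \<Rightarrow> nat \<Rightarrow> nat \<Rightarrow> real \<times> real \<Rightarrow> real"
    and v v' v'' :: "real \<Rightarrow> nat \<Rightarrow> nat \<Rightarrow> nat \<Rightarrow> real \<times> real \<Rightarrow> real"
    and S :: "real \<Rightarrow> nat \<Rightarrow> nat \<Rightarrow> nat \<Rightarrow> nat \<Rightarrow> real \<times> real \<Rightarrow> real"
  assumes mesh: "0 < Nx" "0 < Nz" "\<forall>i<Nx. xs i < xs (Suc i)" "\<forall>j<Nz. zs j < zs (Suc j)"
    and A_C1: "\<forall>i<Nx. \<forall>j<Nz. \<forall>m<M. \<forall>l<M. \<exists>U. open U \<and> cell xs zs i j \<subseteq> U \<and>
                 (\<forall>y\<in>U. A i j m l differentiable (at y)) \<and>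
                 continuous_on U (pdx (A i j m l)) \<and> continuous_on U (pdz (A i j m l))"
    and A_sym: "\<forall>i<Nx. \<forall>j<Nz. \<forall>y\<in>cell xs zs i j. \<forall>m<M. \<forall>l<M. A i j m l y = A i j l m y"
    and A_pd: "\<forall>i<Nx. \<forall>j<Nz. \<forall>y\<in>cell xs zs i j. \<forall>\<xi> :: nat \<Rightarrow> real. (\<exists>m<M. \<xi> m \<noteq> 0) \<longrightarrow>
                 0 < (\<Sum>m<M. \<Sum>l<M. \<xi> m * A i j m l y * \<xi> l)"
    and v_Vh: "\<forall>t>0. Vh Nx Nz M k (v t) \<and> Vh Nx Nz M k (v' t) \<and> Vh Nx Nz M k (v'' t)"
    and S_Vh: "\<forall>t>0. Vh2 Nx Nz M k (S t)"
    and v_deriv: "\<forall>t>0. \<forall>i<Nx. \<forall>j<Nz. \<forall>m<M. \<forall>y.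
                 ((\<lambda>s. v s i j m y) has_real_derivative v' t i j m y) (at t)"
    and v'_deriv: "\<forall>t>0. \<forall>i<Nx. \<forall>j<Nz. \<forall>m<M. \<forall>y.
                 ((\<lambda>s. v' s i j m y) has_real_derivative v'' t i j m y) (at t)"
    and scheme1: "\<forall>t>0. \<forall>i<Nx. \<forall>j<Nz. \<forall>p. Vh Nx Nz M k p \<longrightarrow>
                 eq1 Nx Nz M xs zs A (v'' t) (S t) i j p"
    and scheme2: "\<forall>t>0. \<forall>i<Nx. \<forall>j<Nz. \<forall>w. Vh2 Nx Nz M k w \<longrightarrow>
                 eq2 Nx Nz M xs zs A (v t) (S t) i j w"
  shows "\<forall>t>0. ((\<lambda>s. energy Nx Nz M xs zs (v' s) (S s)) has_real_derivative 0) (at t)"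
proof (intro allI impI)
  fix t :: real
  assume t: "0 < t"
  interpret sch Nx Nz M k xs zs A v v' v'' S t
    apply unfold_locales
    apply (fact mesh)+
    apply (fact A_C1)
    apply (fact A_sym)
    apply (fact v_Vh)
    apply (fact S_Vh)
    apply (fact v_deriv)
    apply (fact v'_deriv)
    apply (fact scheme1)
    apply (fact scheme2)
    apply (fact t)
    done
  show "((\<lambda>s. energy Nx Nz M xs zs (v' s) (S s)) has_real_derivative 0) (at t)"
    using energy_deriv total_zero by simp
qed

end
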